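(* In the setting below, there is $C_\omega>0$ such that whenever $B$ is a $d_\rho$-ball in $\widehat X$ with center $(x_0,y_0)$ and radius $R>0$ such that $\infty\notin2B$, then for every $(x,y)\in B$: $\omega(x_0,y_0)/C_\omega\le\omega(x,y)\le C_\omega\omega(x_0,y_0)$, $\rho(x_0,y_0)/C_\omega\le\rho(x,y)\le C_\omega\rho(x_0,y_0)$, and $\frac{\rho(x_0,y_0)}{C_\omega}d((x_0,y_0),(x,y))\le d_\rho((x_0,y_0),(x,y))\le C_\omega\rho(x_0,y_0)d((x_0,y_0),(x,y))$; and if in addition $y_0\ge1$ and $y>1$, then $\frac1{C_\omega(\beta-1)}\big|y_0^{1-\beta}-y^{1-\beta}\big|+\frac{d_Z(x,x_0)}{C_\omega y_0^\beta}\le d_\rho((x,y),(x_0,y_0))\le\frac{C_\omega}{\beta-1}\big|y_0^{1-\beta}-y^{1-\beta}\big|+\frac{C_\omega}{y_0^\beta}d_Z(x,x_0)$.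
   Context: Setting: $(Z,d_Z,\mu_Z)$ is a compact doubling metric measure space that is geodesic and supports a $2$-Poincaré inequality. Fix $-1<a<1$ and $\beta>1$. Let $X=Z\times[0,\infty)$ with metric $d((x_1,y_1),(x_2,y_2))=\max\{d_Z(x_1,x_2),|y_1-y_2|\}$ and measure $d\mu_X(x,y)=y^a\,d\mu_Z(x)\,dy$. Set $\rho(x,y)=\min\{1,y^{-\beta}\}$, $\omega(x,y)=\min\{1,y^{-2\beta}\}$, $d_\rho(p_1,p_2)=\inf_\gamma\int_\gamma\rho\,ds$ (infimum over rectifiable curves in $X$ joining $p_1,p_2$), and $\mu_\omega=\omega\,\mu_X$. Let $\widehat X=X\cup\{\infty\}$ with $d_\rho((x,y),\infty)=\int_y^\infty\rho(x,t)\,dt$. For a ball $B$ of center $c$ and radius $R$, $2B$ is the ball of center $c$ and radius $2R$. *)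

theory Defs
  imports "HOL-Analysis.Analysis"
begin

definition curve_length :: "('p \<Rightarrow> 'p \<Rightarrow> real) \<Rightarrow> (real \<Rightarrow> 'p) \<Rightarrow> real \<Rightarrow> real \<Rightarrow> ennreal" where
  "curve_length d \<gamma> a b =
     (SUP ts \<in> {ts. sorted ts \<and> set ts \<subseteq> {a..b}}.
        ennreal (sum_list (map2 (\<lambda>s t. d (\<gamma> s) (\<gamma> t)) ts (tl ts))))"

definition curve_cont :: "('p \<Rightarrow> 'p \<Rightarrow> real) \<Rightarrow> (real \<Rightarrow> 'p) \<Rightarrow> real \<Rightarrow> real \<Rightarrow> bool" where
  "curve_cont d \<gamma> a b \<longleftrightarrow>
     (\<forall>t\<in>{a..b}. \<forall>e>0. \<exists>\<delta>>0. \<forall>s\<in>{a..b}. \<bar>s - t\<bar> < \<delta> \<longrightarrow> d (\<gamma> s) (\<gamma> t) < e)"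

definition rect_curve :: "('p \<Rightarrow> 'p \<Rightarrow> real) \<Rightarrow> 'p set \<Rightarrow> (real \<Rightarrow> 'p) \<Rightarrow> real \<Rightarrow> real \<Rightarrow> bool" where
  "rect_curve d S \<gamma> a b \<longleftrightarrow>
     a \<le> b \<and> curve_cont d \<gamma> a b \<and> \<gamma> ` {a..b} \<subseteq> S \<and> curve_length d \<gamma> a b < \<infinity>"

definition arclen_fun :: "('p \<Rightarrow> 'p \<Rightarrow> real) \<Rightarrow> (real \<Rightarrow> 'p) \<Rightarrow> real \<Rightarrow> real \<Rightarrow> real \<Rightarrow> real" where
  "arclen_fun d \<gamma> a b = (\<lambda>t. enn2real (curve_length d \<gamma> a (max a (min t b))))"

definition line_integral :: "('p \<Rightarrow> 'p \<Rightarrow> real) \<Rightarrow> ('p \<Rightarrow> real) \<Rightarrow> (real \<Rightarrow> 'p) \<Rightarrow> real \<Rightarrow> real \<Rightarrow> ennreal" where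
  "line_integral d g \<gamma> a b =
     (\<integral>\<^sup>+ t \<in> {a..b}. ennreal (g (\<gamma> t)) \<partial>(interval_measure (arclen_fun d \<gamma> a b)))"

definition d_weighted :: "('p \<Rightarrow> 'p \<Rightarrow> real) \<Rightarrow> 'p set \<Rightarrow> ('p \<Rightarrow> real) \<Rightarrow> 'p \<Rightarrow> 'p \<Rightarrow> real" where
  "d_weighted d S g p q =
     enn2real (INF c \<in> {(\<gamma>, a, b). rect_curve d S \<gamma> a b \<and> \<gamma> a = p \<and> \<gamma> b = q}.
                 (case c of (\<gamma>, a, b) \<Rightarrow> line_integral d g \<gamma> a b))"

definition geodesic_space :: "'a::metric_space set \<Rightarrow> bool" where
  "geodesic_space S \<longleftrightarrow>
     (\<forall>p\<in>S. \<forall>q\<in>S. \<exists>\<gamma>. \<gamma> 0 = p \<and> \<gamma> (dist p q) = q \<and> \<gamma> ` {0..dist p q} \<subseteq> S \<and>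
        (\<forall>s\<in>{0..dist p q}. \<forall>t\<in>{0..dist p q}. dist (\<gamma> s) (\<gamma> t) = \<bar>s - t\<bar>))"

definition doubling_measure :: "'a::metric_space measure \<Rightarrow> bool" where
  "doubling_measure \<mu> \<longleftrightarrow>
     sets \<mu> = sets borel \<and>
     (\<forall>x r. r > 0 \<longrightarrow> 0 < emeasure \<mu> (ball x r) \<and> emeasure \<mu> (ball x r) < \<infinity>) \<and>
     (\<exists>C. \<forall>x r. r > 0 \<longrightarrow> emeasure \<mu> (ball x (2 * r)) \<le> ennreal C * emeasure \<mu> (ball x r))"

definition upper_gradient :: "('a::metric_space \<Rightarrow> real) \<Rightarrow> ('a \<Rightarrow> real) \<Rightarrow> bool" where
  "upper_gradient u g \<longleftrightarrow>
     g \<in> borel_measurable borel \<and> (\<forall>x. g x \<ge> 0) \<and>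
     (\<forall>\<gamma> a b. rect_curve dist UNIV \<gamma> a b \<longrightarrow>
        ennreal \<bar>u (\<gamma> a) - u (\<gamma> b)\<bar> \<le> line_integral dist g \<gamma> a b)"

text \<open>(1,2)-Poincare inequality, squared form:
  (avg_B |u - u_B|)^2 \<le> C^2 r^2 avg_{L B} g^2.\<close>
definition supports_2_poincare :: "'a::metric_space measure \<Rightarrow> bool" where
  "supports_2_poincare \<mu> \<longleftrightarrow>
     (\<exists>C>0. \<exists>L\<ge>1. \<forall>u g x r. r > 0 \<and> u \<in> borel_measurable \<mu> \<and> integrable \<mu> u \<and> upper_gradient u g \<longrightarrow>
        (let uB = (LINT y:ball x r|\<mu>. u y) / measure \<mu> (ball x r) in
          ((\<integral>\<^sup>+ y \<in> ball x r. ennreal \<bar>u y - uB\<bar> \<partial>\<mu>) / emeasure \<mu> (ball x r))\<^sup>2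
          \<le> ennreal (C\<^sup>2 * r\<^sup>2) *
             ((\<integral>\<^sup>+ y \<in> ball x (L * r). ennreal ((g y)\<^sup>2) \<partial>\<mu>) / emeasure \<mu> (ball x (L * r)))))"

definition dX :: "('a::metric_space \<times> real) \<Rightarrow> ('a \<times> real) \<Rightarrow> real" where
  "dX p q = max (dist (fst p) (fst q)) \<bar>snd p - snd q\<bar>"

definition Xset :: "('a::metric_space \<times> real) set" where
  "Xset = {p. snd p \<ge> 0}"

text \<open>rho(x,y) = min{1, y^-beta}, omega(x,y) = min{1, y^-2beta} (written by cases to avoid 0 powr).\<close>
definition rho_w :: "real \<Rightarrow> ('a \<times> real) \<Rightarrow> real" where
  "rho_w \<beta> p = (if snd p \<le> 1 then 1 else snd p powr (-\<beta>))"

definition omega_w :: "real \<Rightarrow> ('a \<times> real) \<Rightarrow> real" where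
  "omega_w \<beta> p = (if snd p \<le> 1 then 1 else snd p powr (-2 * \<beta>))"

definition d_rho :: "real \<Rightarrow> ('a::metric_space \<times> real) \<Rightarrow> ('a \<times> real) \<Rightarrow> real" where
  "d_rho \<beta> p q = d_weighted dX Xset (rho_w \<beta>) p q"

definition d_rho_inf :: "real \<Rightarrow> ('a::metric_space \<times> real) \<Rightarrow> real" where
  "d_rho_inf \<beta> p = enn2real (\<integral>\<^sup>+ t \<in> {snd p..}. ennreal (rho_w \<beta> (fst p, t)) \<partial>lborel)"

end

theory Submission
  imports Defs
begin

definition rr :: "real \<Rightarrow> real \<Rightarrow> real" where
  "rr \<beta> h = (if h \<le> 1 then 1 else h powr (-\<beta>))"

definition GG :: "real \<Rightarrow> real \<Rightarrow> real" where
  "GG \<beta> h = (if h \<le> 1 then h else 1 + (1 - h powr (1-\<beta>))/(\<beta>-1))"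

lemma rho_rr: "rho_w \<beta> p = rr \<beta> (snd p)"
  by (simp add: rho_w_def rr_def)

lemma omega_rr: "omega_w \<beta> p = (rr \<beta> (snd p))^2"
proof -
  have "snd p > 1 \<Longrightarrow> (snd p powr (-\<beta>))^2 = snd p powr (-2*\<beta>)"
    by (simp add: powr_powr[symmetric] power2_eq_square powr_add[symmetric])
  then show ?thesis by (auto simp: omega_w_def rr_def)
qed

lemma rr_max: "\<beta> \<ge> 0 \<Longrightarrow> rr \<beta> h = (max 1 h) powr (-\<beta>)"
  by (auto simp: rr_def max_def)

lemma rr_pos: "rr \<beta> h > 0"
  by (simp add: rr_def)

lemma rr_antimono: "\<beta> \<ge> 0 \<Longrightarrow> h \<le> h' \<Longrightarrow> rr \<beta> h' \<le> rr \<beta> h"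
  unfolding rr_max by (intro powr_mono2') auto

lemma Bern:
  fixes \<beta> h B :: real
  assumes "\<beta> > 1" "0 < h" "0 < B"
  shows "B powr (1-\<beta>) + (\<beta>-1) * B powr (-\<beta>) * (B - h) \<le> h powr (1-\<beta>)"
proof -
  have cv: "convex_on {0<..} (\<lambda>x::real. x powr (1-\<beta>))"
  proof (rule convex_on_realI[where f'="\<lambda>x. (1-\<beta>) * x powr (-\<beta>)"])
    show "connected {0::real<..}" by simp
    fix x :: real assume "x \<in> {0<..}"
    then show "((\<lambda>x::real. x powr (1-\<beta>)) has_real_derivative (1-\<beta>) * x powr (-\<beta>)) (at x)"
      using has_real_derivative_powr[of x "1-\<beta>"] by simp
  next
    fix x y :: real assume "x \<in> {0<..}" "y \<in> {0<..}" "x \<le> y"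
    then have "y powr (-\<beta>) \<le> x powr (-\<beta>)" using assms by (intro powr_mono2') auto
    then show "(1-\<beta>) * x powr (-\<beta>) \<le> (1-\<beta>) * y powr (-\<beta>)" using assms
      by (intro mult_left_mono_neg) auto
  qed
  have "(1-\<beta>) * B powr (-\<beta>) * (h - B) \<le> h powr (1-\<beta>) - B powr (1-\<beta>)"
    apply (rule convex_on_imp_above_tangent[OF cv, where c=B])
    using assms has_real_derivative_powr[of B "1-\<beta>"] by (auto intro: has_field_derivative_at_within simp: interior_open)
  then show ?thesis by (simp add: algebra_simps)
qed

lemma GG_concave:
  fixes \<beta> h B :: real
  assumes "\<beta> > 1" "h \<le> B"
  shows "GG \<beta> B - GG \<beta> h \<le> rr \<beta> h * (B - h)"
proof (cases "B \<le> 1")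
  case True then show ?thesis using assms by (simp add: GG_def rr_def)
next
  case False
  note B = this
  show ?thesis
  proof (cases "h \<le> 1")
    case True
    have "1 powr (1-\<beta>) + (\<beta>-1) * 1 powr (-\<beta>) * (1 - B) \<le> B powr (1-\<beta>)"
      using Bern[of \<beta> B 1] assms B by auto
    then have "(1 - B powr (1-\<beta>)) \<le> (\<beta>-1) * (B - 1)" by (simp add: algebra_simps)
    then have "(1 - B powr (1-\<beta>))/(\<beta>-1) \<le> B - 1" using assms by (simp add: divide_le_eq mult.commute)
    then show ?thesis using True B assms by (simp add: GG_def rr_def)
  next
    case False
    have "h powr (1-\<beta>) + (\<beta>-1) * h powr (-\<beta>) * (h - B) \<le> B powr (1-\<beta>)"
      using Bern[of \<beta> B h] assms False by auto
    then have "(h powr (1-\<beta>) - B powr (1-\<beta>)) \<le> (\<beta>-1) * (h powr (-\<beta>) * (B - h))" by (simp add: algebra_simps)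
    then have "(h powr (1-\<beta>) - B powr (1-\<beta>))/(\<beta>-1) \<le> h powr (-\<beta>) * (B - h)"
      using assms by (simp add: divide_le_eq mult.commute)
    then show ?thesis using False B assms by (simp add: GG_def rr_def diff_divide_distrib)
  qed
qed

lemma layer_ineq:
  fixes \<beta> h B q :: real
  assumes "\<beta> > 1" "q \<ge> 1" "h \<le> B" "max 1 B \<le> q * max 1 h"
  shows "q powr (-\<beta>) * (GG \<beta> B - GG \<beta> h) \<le> rr \<beta> B * (B - h)"
proof -
  have "rr \<beta> B = (max 1 B) powr (-\<beta>)" using assms by (simp add: rr_max)
  also have "\<dots> \<ge> (q * max 1 h) powr (-\<beta>)" using assms by (intro powr_mono2') auto
  finally have 1: "q powr (-\<beta>) * rr \<beta> h \<le> rr \<beta> B" using assms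
    by (simp add: rr_max powr_mult)
  have "q powr (-\<beta>) * (GG \<beta> B - GG \<beta> h) \<le> q powr (-\<beta>) * (rr \<beta> h * (B - h))"
    by (intro mult_left_mono GG_concave assms) auto
  also have "\<dots> \<le> rr \<beta> B * (B - h)"
    using 1 assms by (simp add: mult.assoc[symmetric] mult_right_mono)
  finally show ?thesis .
qed


lemma dX_nonneg: "dX p q \<ge> 0" by (simp add: dX_def)
lemma dX_sym: "dX p q = dX q p" by (simp add: dX_def dist_commute abs_minus_commute)
lemma dX_refl[simp]: "dX p p = 0" by (simp add: dX_def)
lemma dX_tri: "dX p r \<le> dX p q + dX q r"
  unfolding dX_def using dist_triangle[of "fst p" "fst r" "fst q"] by (auto simp: max_def)
lemma dX_snd: "\<bar>snd p - snd q\<bar> \<le> dX p q" by (simp add: dX_def)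
lemma dX_fst: "dist (fst p) (fst q) \<le> dX p q" by (simp add: dX_def)

definition PS :: "(real \<Rightarrow> 'a::metric_space \<times> real) \<Rightarrow> real list \<Rightarrow> real" where
  "PS \<gamma> ts = sum_list (map2 (\<lambda>s t. dX (\<gamma> s) (\<gamma> t)) ts (tl ts))"

definition parts :: "real \<Rightarrow> real \<Rightarrow> real list set" where
  "parts s t = {ts. sorted ts \<and> set ts \<subseteq> {s..t}}"

lemma CL_def': "curve_length dX \<gamma> s t = (SUP ts\<in>parts s t. ennreal (PS \<gamma> ts))"
  by (simp add: curve_length_def PS_def parts_def)

lemma PS_simps[simp]: "PS \<gamma> [] = 0" "PS \<gamma> [x] = 0"
  "PS \<gamma> (x # y # zs) = dX (\<gamma> x) (\<gamma> y) + PS \<gamma> (y # zs)"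
  by (simp_all add: PS_def)

lemma PS_Cons: "PS \<gamma> (x # xs) = (if xs = [] then 0 else dX (\<gamma> x) (\<gamma> (hd xs)) + PS \<gamma> xs)"
  by (cases xs) auto

lemma PS_nonneg: "PS \<gamma> xs \<ge> 0"
  by (induction xs) (auto simp: PS_Cons dX_nonneg)

lemma PS_append: "PS \<gamma> (A @ B) = PS \<gamma> A + PS \<gamma> B +
   (if A \<noteq> [] \<and> B \<noteq> [] then dX (\<gamma> (last A)) (\<gamma> (hd B)) else 0)"
proof (induction A)
  case Nil then show ?case by simp
next
  case (Cons x A)
  then show ?case by (cases A; cases B) (auto simp: PS_Cons)
qed

lemma sorted_filter_split: "sorted xs \<Longrightarrow> filter (\<lambda>x. x \<le> m) xs @ filter (\<lambda>x. m < x) xs = (xs::real list)"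
proof (induction xs)
  case Nil then show ?case by simp
next
  case (Cons x xs)
  show ?case
  proof (cases "x \<le> m")
    case True then show ?thesis using Cons by auto
  next
    case False
    then have "\<forall>y\<in>set xs. m < y" using Cons.prems by auto
    then have "filter (\<lambda>x. x \<le> m) xs = []" "filter (\<lambda>x. m < x) xs = xs"
      by (auto simp: filter_empty_conv filter_id_conv)
    then show ?thesis using False by auto
  qed
qed

lemma PS_split:
  assumes "sorted xs"
  shows "PS \<gamma> xs \<le> PS \<gamma> (filter (\<lambda>x. x \<le> m) xs @ [m]) + PS \<gamma> (m # filter (\<lambda>x. m < x) xs)"
proof -
  define A where "A = filter (\<lambda>x. x \<le> m) xs"
  define B where "B = filter (\<lambda>x. m < x) xs"
  have "PS \<gamma> (A @ B) \<le> PS \<gamma> (A @ [m]) + PS \<gamma> (m # B)"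
  proof (cases "A = []")
    case True
    then show ?thesis using dX_nonneg[of "\<gamma> m" "\<gamma> (hd B)"] PS_Cons[of \<gamma> m B] by simp
  next
    case A: False
    show ?thesis
    proof (cases "B = []")
      case True
      then show ?thesis using A dX_nonneg[of "\<gamma> (last A)" "\<gamma> m"] PS_append[of \<gamma> A "[m]"] by simp
    next
      case False
      have e1: "PS \<gamma> (A @ B) = PS \<gamma> A + PS \<gamma> B + dX (\<gamma> (last A)) (\<gamma> (hd B))"
        using A False PS_append[of \<gamma> A B] by simp
      have e2: "PS \<gamma> (A @ [m]) = PS \<gamma> A + dX (\<gamma> (last A)) (\<gamma> m)"
        using A PS_append[of \<gamma> A "[m]"] by simp
      have e3: "PS \<gamma> (m # B) = dX (\<gamma> m) (\<gamma> (hd B)) + PS \<gamma> B"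
        using False PS_Cons[of \<gamma> m B] by simp
      show ?thesis unfolding e1 e2 e3
        using dX_tri[of "\<gamma> (last A)" "\<gamma> (hd B)" "\<gamma> m"] by linarith
    qed
  qed
  then have "PS \<gamma> (filter (\<lambda>x. x \<le> m) xs @ filter (\<lambda>x. m < x) xs)
     \<le> PS \<gamma> (filter (\<lambda>x. x \<le> m) xs @ [m]) + PS \<gamma> (m # filter (\<lambda>x. m < x) xs)"
    unfolding A_def B_def .
  then show ?thesis unfolding sorted_filter_split[OF assms] .
qed

lemma PS_const: "(\<forall>x\<in>set A. x = t0) \<Longrightarrow> PS \<gamma> A = 0"
proof (induction A)
  case Nil then show ?case by simp
next
  case (Cons x A)
  then show ?case by (cases A) (auto simp: PS_Cons)
qed

lemma PS_const_snoc: "(\<forall>x\<in>set A. x = t0) \<Longrightarrow> PS \<gamma> (A @ [t]) \<le> dX (\<gamma> t0) (\<gamma> t)"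
  using PS_const[of A t0 \<gamma>] dX_nonneg[of "\<gamma> t0" "\<gamma> t"] last_in_set[of A] by (auto simp: PS_append)

lemma CL_ge: "ts \<in> parts s t \<Longrightarrow> ennreal (PS \<gamma> ts) \<le> curve_length dX \<gamma> s t"
  unfolding CL_def' by (rule SUP_upper)

lemma CL_le: "(\<And>ts. ts \<in> parts s t \<Longrightarrow> PS \<gamma> ts \<le> X) \<Longrightarrow> curve_length dX \<gamma> s t \<le> ennreal X"
  unfolding CL_def' by (rule SUP_least) (simp add: ennreal_leI)

lemma CL_mono_int: "s \<le> s' \<Longrightarrow> t' \<le> t \<Longrightarrow> curve_length dX \<gamma> s' t' \<le> curve_length dX \<gamma> s t"
  unfolding CL_def' by (rule SUP_subset_mono) (auto simp: parts_def)

lemma CL_ge_dX: "s \<le> t \<Longrightarrow> ennreal (dX (\<gamma> s) (\<gamma> t)) \<le> curve_length dX \<gamma> s t"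
  using CL_ge[of "[s,t]" s t \<gamma>] by (simp add: parts_def)

lemma CL_approx:
  assumes "curve_length dX \<gamma> s t < \<infinity>" "e > 0"
  shows "\<exists>ts\<in>parts s t. enn2real (curve_length dX \<gamma> s t) - e < PS \<gamma> ts"
proof (cases "enn2real (curve_length dX \<gamma> s t) - e < 0")
  case True
  then show ?thesis by (intro bexI[of _ "[]"]) (auto simp: parts_def)
next
  case False
  let ?L = "curve_length dX \<gamma> s t"
  have "ennreal (enn2real ?L - e) < ennreal (enn2real ?L)"
    using False assms(2) by (subst ennreal_less_iff) auto
  also have "\<dots> = ?L" using assms by (simp add: ennreal_enn2real_if)
  finally have "ennreal (enn2real ?L - e) < (SUP ts\<in>parts s t. ennreal (PS \<gamma> ts))"
    by (simp add: CL_def')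
  then obtain ts where "ts \<in> parts s t" "ennreal (enn2real ?L - e) < ennreal (PS \<gamma> ts)"
    by (auto simp: less_SUP_iff)
  then have "enn2real ?L - e < PS \<gamma> ts"
    using ennreal_less_iff[of "enn2real ?L - e" "PS \<gamma> ts"] PS_nonneg[of \<gamma> ts] False by auto
  then show ?thesis using \<open>ts \<in> parts s t\<close> by blast
qed

lemma CL_subadd:
  assumes "s \<le> m" "m \<le> t"
  shows "curve_length dX \<gamma> s t \<le> curve_length dX \<gamma> s m + curve_length dX \<gamma> m t"
  unfolding CL_def'[of \<gamma> s t]
proof (rule SUP_least)
  fix ts assume ts: "ts \<in> parts s t"
  let ?A = "filter (\<lambda>x. x \<le> m) ts @ [m]" and ?B = "m # filter (\<lambda>x. m < x) ts"
  have A: "?A \<in> parts s m" using ts assms by (auto simp: parts_def sorted_append sorted_wrt_filter)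
  have B: "?B \<in> parts m t" using ts assms by (auto simp: parts_def sorted_wrt_filter)
  have "ennreal (PS \<gamma> ts) \<le> ennreal (PS \<gamma> ?A + PS \<gamma> ?B)"
    using PS_split[of ts \<gamma> m] ts by (intro ennreal_leI) (auto simp: parts_def)
  also have "\<dots> = ennreal (PS \<gamma> ?A) + ennreal (PS \<gamma> ?B)"
    by (rule ennreal_plus[OF PS_nonneg PS_nonneg])
  also have "\<dots> \<le> curve_length dX \<gamma> s m + curve_length dX \<gamma> m t"
    by (intro add_mono CL_ge A B)
  finally show "ennreal (PS \<gamma> ts) \<le> curve_length dX \<gamma> s m + curve_length dX \<gamma> m t" .
qed

lemma CL_superadd:
  assumes "s \<le> m" "m \<le> t" "curve_length dX \<gamma> s t < \<infinity>"
  shows "enn2real (curve_length dX \<gamma> s m) + enn2real (curve_length dX \<gamma> m t)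
          \<le> enn2real (curve_length dX \<gamma> s t)"
proof (rule field_le_epsilon)
  fix e :: real assume e: "e > 0"
  have f1: "curve_length dX \<gamma> s m < \<infinity>"
    using CL_mono_int[of s s m t \<gamma>] assms by auto
  have f2: "curve_length dX \<gamma> m t < \<infinity>"
    using CL_mono_int[of s m t t \<gamma>] assms by auto
  obtain P1 where P1: "P1 \<in> parts s m" "enn2real (curve_length dX \<gamma> s m) - e/2 < PS \<gamma> P1"
    using CL_approx[OF f1, of "e/2"] e by auto
  obtain P2 where P2: "P2 \<in> parts m t" "enn2real (curve_length dX \<gamma> m t) - e/2 < PS \<gamma> P2"
    using CL_approx[OF f2, of "e/2"] e by auto
  have "\<forall>x\<in>set P1. \<forall>y\<in>set P2. x \<le> y" using P1(1) P2(1) by (force simp: parts_def)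
  then have P: "P1 @ P2 \<in> parts s t" using P1 P2 assms
    by (auto simp: parts_def sorted_append)
  have "PS \<gamma> P1 + PS \<gamma> P2 \<le> PS \<gamma> (P1 @ P2)"
    by (simp add: PS_append dX_nonneg)
  also have "ennreal (PS \<gamma> (P1 @ P2)) \<le> curve_length dX \<gamma> s t" by (rule CL_ge[OF P])
  then have "enn2real (ennreal (PS \<gamma> (P1 @ P2))) \<le> enn2real (curve_length dX \<gamma> s t)"
    using assms(3) by (intro enn2real_mono) auto
  then have "PS \<gamma> (P1 @ P2) \<le> enn2real (curve_length dX \<gamma> s t)"
    using PS_nonneg[of \<gamma> "P1 @ P2"] by simp
  finally show "enn2real (curve_length dX \<gamma> s m) + enn2real (curve_length dX \<gamma> m t)
          \<le> enn2real (curve_length dX \<gamma> s t) + e" using P1 P2 by linarith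
qed

lemma CL_ge_dX_real:
  assumes "s \<le> t" "curve_length dX \<gamma> s t < \<infinity>"
  shows "dX (\<gamma> s) (\<gamma> t) \<le> enn2real (curve_length dX \<gamma> s t)"
proof -
  have "enn2real (ennreal (dX (\<gamma> s) (\<gamma> t))) \<le> enn2real (curve_length dX \<gamma> s t)"
    using CL_ge_dX[OF assms(1), of \<gamma>] assms(2) by (intro enn2real_mono) auto
  then show ?thesis using dX_nonneg[of "\<gamma> s" "\<gamma> t"] by simp
qed


lemma CL_fin: "rect_curve dX S \<gamma> a b \<Longrightarrow> a \<le> s \<Longrightarrow> t \<le> b \<Longrightarrow> curve_length dX \<gamma> s t < \<infinity>"
  using CL_mono_int[of a s t b \<gamma>] by (auto simp: rect_curve_def)

lemma CL_zero: "curve_length dX \<gamma> s s = 0"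
proof -
  have "curve_length dX \<gamma> s s \<le> ennreal 0"
  proof (rule CL_le)
    fix ts assume "ts \<in> parts s s"
    then have "\<forall>x\<in>set ts. x = s" by (auto simp: parts_def)
    then show "PS \<gamma> ts \<le> 0" by (simp add: PS_const)
  qed
  then show ?thesis by simp
qed

lemma arclen_eq: "arclen_fun dX \<gamma> a b t = enn2real (curve_length dX \<gamma> a (max a (min t b)))"
  by (simp add: arclen_fun_def)

lemma F_mono:
  assumes "rect_curve dX S \<gamma> a b" "x \<le> y"
  shows "arclen_fun dX \<gamma> a b x \<le> arclen_fun dX \<gamma> a b y"
proof -
  have ab: "a \<le> b" using assms by (simp add: rect_curve_def)
  have "curve_length dX \<gamma> a (max a (min x b)) \<le> curve_length dX \<gamma> a (max a (min y b))"
    using assms by (intro CL_mono_int) auto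
  moreover have "curve_length dX \<gamma> a (max a (min y b)) < \<infinity>"
    using ab by (intro CL_fin[OF assms(1)]) auto
  ultimately show ?thesis unfolding arclen_eq by (intro enn2real_mono) auto
qed

lemma CL_main:
  assumes r: "rect_curve dX S \<gamma> a b" and t0: "a \<le> t0" "t0 < b" and e: "e > 0"
  shows "\<exists>d>0. t0 + d \<le> b \<and>
    enn2real (curve_length dX \<gamma> a (t0 + d)) - enn2real (curve_length dX \<gamma> a t0) < e"
proof -
  have ab: "a \<le> b" and cc: "curve_cont dX \<gamma> a b" using r by (auto simp: rect_curve_def)
  let ?l = "\<lambda>s t. enn2real (curve_length dX \<gamma> s t)"
  have fin: "curve_length dX \<gamma> t0 b < \<infinity>" using t0 by (intro CL_fin[OF r]) auto
  obtain P where P: "P \<in> parts t0 b" "?l t0 b - e/2 < PS \<gamma> P"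
    using CL_approx[OF fin, of "e/2"] e by auto
  have "t0 \<in> {a..b}" using t0 by auto
  from cc[unfolded curve_cont_def, rule_format, OF this, of "e/2"] e
  obtain d1 where d1: "d1 > 0" "\<forall>s\<in>{a..b}. \<bar>s - t0\<bar> < d1 \<longrightarrow> dX (\<gamma> s) (\<gamma> t0) < e/2"
    by auto
  define D where "D = {x - t0 | x. x \<in> set P \<and> x > t0} \<union> {b - t0}"
  have Dfin: "finite D" unfolding D_def by auto
  have Dne: "D \<noteq> {}" unfolding D_def by auto
  have Dpos: "\<forall>x\<in>D. x > 0" unfolding D_def using t0 by auto
  define d2 where "d2 = Min D"
  have d2: "d2 > 0" using Dfin Dne Dpos by (simp add: d2_def)
  have d2le: "\<And>x. x \<in> D \<Longrightarrow> d2 \<le> x" using Dfin by (simp add: d2_def)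
  define d where "d = min (d1/2) (d2/2)"
  have d: "d > 0" using d1 d2 by (simp add: d_def)
  define t where "t = t0 + d"
  have tb: "t \<le> b" using d2le[of "b - t0"] d2 by (auto simp: D_def t_def d_def)
  have tt0: "t0 < t" using d by (simp add: t_def)
  have small: "\<forall>x\<in>set P. x \<le> t \<longrightarrow> x = t0"
  proof (intro ballI impI)
    fix x assume x: "x \<in> set P" "x \<le> t"
    have "x \<ge> t0" using x P(1) by (auto simp: parts_def)
    show "x = t0"
    proof (rule ccontr)
      assume "x \<noteq> t0"
      then have "x - t0 \<in> D" using x \<open>x \<ge> t0\<close> unfolding D_def by auto
      then have "d2 \<le> x - t0" by (rule d2le)
      then show False using x d2 by (auto simp: t_def d_def)
    qed
  qed
  have Ps: "sorted P" using P(1) by (simp add: parts_def)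
  have "PS \<gamma> P \<le> PS \<gamma> (filter (\<lambda>x. x \<le> t) P @ [t]) + PS \<gamma> (t # filter (\<lambda>x. t < x) P)"
    by (rule PS_split[OF Ps])
  also have "PS \<gamma> (filter (\<lambda>x. x \<le> t) P @ [t]) \<le> dX (\<gamma> t0) (\<gamma> t)"
    by (rule PS_const_snoc) (use small in auto)
  also have "dX (\<gamma> t0) (\<gamma> t) < e/2"
  proof -
    have "t \<in> {a..b}" using t0 tb tt0 by auto
    moreover have "\<bar>t - t0\<bar> < d1" using d d1 by (auto simp: t_def d_def)
    ultimately have "dX (\<gamma> t) (\<gamma> t0) < e/2" using d1(2) by auto
    then show ?thesis by (subst dX_sym)
  qed
  also have "PS \<gamma> (t # filter (\<lambda>x. t < x) P) \<le> ?l t b"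
  proof -
    have "t # filter (\<lambda>x. t < x) P \<in> parts t b"
      using P(1) tb by (auto simp: parts_def sorted_wrt_filter)
    then have "enn2real (ennreal (PS \<gamma> (t # filter (\<lambda>x. t < x) P))) \<le> ?l t b"
      using CL_fin[OF r, of t b] t0 tt0 by (intro enn2real_mono CL_ge) auto
    then show ?thesis using PS_nonneg[of \<gamma> "t # filter (\<lambda>x. t < x) P"] by simp
  qed
  finally have 1: "?l t0 b - e < ?l t b" using P(2) by linarith
  have 2: "?l t0 t + ?l t b \<le> ?l t0 b" using tt0 tb fin by (intro CL_superadd) auto
  have "curve_length dX \<gamma> a t \<le> curve_length dX \<gamma> a t0 + curve_length dX \<gamma> t0 t"
    using t0 tt0 by (intro CL_subadd) auto
  then have "?l a t \<le> enn2real (curve_length dX \<gamma> a t0 + curve_length dX \<gamma> t0 t)"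
    using CL_fin[OF r, of a t0] CL_fin[OF r, of t0 t] t0 tt0 tb by (intro enn2real_mono) auto
  also have "\<dots> = ?l a t0 + ?l t0 t"
    using CL_fin[OF r, of a t0] CL_fin[OF r, of t0 t] t0 tt0 tb by (intro enn2real_plus) auto
  finally have 3: "?l a t \<le> ?l a t0 + ?l t0 t" .
  show ?thesis using 1 2 3 d tb by (intro exI[of _ d]) (auto simp: t_def)
qed

lemma F_rcont:
  assumes r: "rect_curve dX S \<gamma> a b"
  shows "continuous (at_right t0) (arclen_fun dX \<gamma> a b)"
proof (subst continuous_at_right_real_increasing)
  show "\<And>x y. x \<le> y \<Longrightarrow> arclen_fun dX \<gamma> a b x \<le> arclen_fun dX \<gamma> a b y"
    using F_mono[OF r] by auto
  have ab: "a \<le> b" using r by (simp add: rect_curve_def)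
  show "\<forall>e>0. \<exists>d>0. arclen_fun dX \<gamma> a b (t0 + d) - arclen_fun dX \<gamma> a b t0 < e"
  proof (intro allI impI)
    fix e :: real assume e: "e > 0"
    consider "t0 < a" | "a \<le> t0" "t0 < b" | "b \<le> t0" by linarith
    then show "\<exists>d>0. arclen_fun dX \<gamma> a b (t0 + d) - arclen_fun dX \<gamma> a b t0 < e"
    proof cases
      case 1
      then show ?thesis using e ab
        by (intro exI[of _ "a - t0"]) (auto simp: arclen_eq max_def min_def)
    next
      case 2
      then obtain d where d: "d > 0" "t0 + d \<le> b"
        "enn2real (curve_length dX \<gamma> a (t0 + d)) - enn2real (curve_length dX \<gamma> a t0) < e"
        using CL_main[OF r _ _ e] by blast
      then show ?thesis using 2
        by (intro exI[of _ d]) (auto simp: arclen_eq max_def min_def)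
    next
      case 3
      then show ?thesis using e ab
        by (intro exI[of _ 1]) (auto simp: arclen_eq max_def min_def)
    qed
  qed
qed

lemma mu_Ioc:
  assumes r: "rect_curve dX S \<gamma> a b" and "u \<le> w"
  shows "emeasure (interval_measure (arclen_fun dX \<gamma> a b)) {u<..w}
     = ennreal (arclen_fun dX \<gamma> a b w - arclen_fun dX \<gamma> a b u)"
  using assms by (intro emeasure_interval_measure_Ioc F_rcont[OF r] F_mono[OF r]) auto

lemma F_diff_ge:
  assumes r: "rect_curve dX S \<gamma> a b" and "a \<le> u" "u \<le> w" "w \<le> b"
  shows "dX (\<gamma> u) (\<gamma> w) \<le> arclen_fun dX \<gamma> a b w - arclen_fun dX \<gamma> a b u"
proof -
  let ?l = "\<lambda>s t. enn2real (curve_length dX \<gamma> s t)"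
  have "dX (\<gamma> u) (\<gamma> w) \<le> ?l u w" using assms by (intro CL_ge_dX_real CL_fin[OF r]) auto
  also have "?l a u + ?l u w \<le> ?l a w" using assms by (intro CL_superadd CL_fin[OF r]) auto
  then have "?l u w \<le> ?l a w - ?l a u" by simp
  finally show ?thesis using assms by (simp add: arclen_eq max_def min_def)
qed


locale curv =
  fixes \<gamma> :: "real \<Rightarrow> 'a::metric_space \<times> real" and a b \<beta> :: real
  assumes rc: "rect_curve dX Xset \<gamma> a b" and beta: "\<beta> > 1"
begin

abbreviation "y t \<equiv> snd (\<gamma> t)"
abbreviation "\<mu> \<equiv> interval_measure (arclen_fun dX \<gamma> a b)"
definition "fR t = indicator {a..b} t * rho_w \<beta> (\<gamma> t)"
definition "cost u w = (\<integral>\<^sup>+ t. ennreal (fR t) * indicator {u<..w} t \<partial>\<mu>)"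

lemma ab: "a \<le> b" using rc by (simp add: rect_curve_def)

lemma y_nonneg: "t \<in> {a..b} \<Longrightarrow> y t \<ge> 0"
  using rc by (auto simp: rect_curve_def Xset_def image_subset_iff)

lemma y_cont: "continuous_on {a..b} y"
  unfolding continuous_on_iff
proof (intro ballI allI impI)
  fix t e :: real assume t: "t \<in> {a..b}" and e: "e > 0"
  have cc: "curve_cont dX \<gamma> a b" using rc by (simp add: rect_curve_def)
  from cc[unfolded curve_cont_def, rule_format, OF t e]
  obtain d where d: "d > 0" "\<forall>s\<in>{a..b}. \<bar>s - t\<bar> < d \<longrightarrow> dX (\<gamma> s) (\<gamma> t) < e" by auto
  show "\<exists>d>0. \<forall>x'\<in>{a..b}. dist x' t < d \<longrightarrow> dist (y x') (y t) < e"
  proof (intro exI[of _ d] conjI ballI impI)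
    fix s assume "s \<in> {a..b}" "dist s t < d"
    then have "dX (\<gamma> s) (\<gamma> t) < e" using d by (auto simp: dist_real_def)
    then show "dist (y s) (y t) < e" using dX_snd[of "\<gamma> s" "\<gamma> t"] by (simp add: dist_real_def)
  qed (use d in auto)
qed

lemma rho_cont: "continuous_on {a..b} (\<lambda>t. rho_w \<beta> (\<gamma> t))"
proof -
  have "continuous_on {a..b} (\<lambda>t. (max 1 (y t)) powr (-\<beta>))"
    by (intro continuous_intros y_cont) auto
  then show ?thesis using beta by (simp add: rho_rr rr_max)
qed

lemma fR_meas[measurable]: "fR \<in> borel_measurable borel"
proof -
  have "(\<lambda>t. indicator {a..b} t *\<^sub>R rho_w \<beta> (\<gamma> t)) \<in> borel_measurable borel"
    by (intro borel_measurable_continuous_on_indicator rho_cont) auto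
  then show ?thesis by (simp add: fR_def[abs_def])
qed

lemma integrand_meas: "(\<lambda>t. ennreal (fR t) * indicator {u<..w} t) \<in> borel_measurable \<mu>"
  by measurable

lemma cost_layer:
  assumes "a \<le> u" "u \<le> w" "w \<le> b" "0 \<le> m" "\<And>t. t \<in> {u<..w} \<Longrightarrow> m \<le> rho_w \<beta> (\<gamma> t)"
  shows "ennreal (m * dX (\<gamma> u) (\<gamma> w)) \<le> cost u w"
proof -
  have "ennreal (m * dX (\<gamma> u) (\<gamma> w)) = ennreal m * ennreal (dX (\<gamma> u) (\<gamma> w))"
    by (rule ennreal_mult) (use assms dX_nonneg[of "\<gamma> u" "\<gamma> w"] in auto)
  also have "\<dots> \<le> ennreal m * ennreal (arclen_fun dX \<gamma> a b w - arclen_fun dX \<gamma> a b u)"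
    using F_diff_ge[OF rc, of u w] assms by (intro mult_left_mono ennreal_leI) auto
  also have "\<dots> = ennreal m * emeasure \<mu> {u<..w}"
    using mu_Ioc[OF rc, of u w] assms by simp
  also have "\<dots> = (\<integral>\<^sup>+ t. ennreal m * indicator {u<..w} t \<partial>\<mu>)"
    by (rule nn_integral_cmult_indicator[symmetric]) simp
  also have "\<dots> \<le> cost u w"
    unfolding cost_def
  proof (rule nn_integral_mono)
    fix t
    show "ennreal m * indicator {u<..w} t \<le> ennreal (fR t) * indicator {u<..w} t"
    proof (cases "t \<in> {u<..w}")
      case True
      then have "fR t = rho_w \<beta> (\<gamma> t)" using assms by (auto simp: fR_def)
      then show ?thesis using True assms by (auto intro: ennreal_leI)
    qed simp
  qed
  finally show ?thesis .
qed

lemma cost_split: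
  assumes "s \<le> u" "u \<le> w" "w \<le> T"
  shows "cost s u + cost u w \<le> cost s T"
proof -
  have "cost s u + cost u w = (\<integral>\<^sup>+ t. ennreal (fR t) * indicator {s<..u} t + ennreal (fR t) * indicator {u<..w} t \<partial>\<mu>)"
    unfolding cost_def by (rule nn_integral_add[symmetric]) (auto intro: integrand_meas)
  also have "\<dots> \<le> cost s T"
    unfolding cost_def using assms by (intro nn_integral_mono) (auto split: split_indicator)
  finally show ?thesis .
qed

lemma cost_mono: "s \<le> s' \<Longrightarrow> T' \<le> T \<Longrightarrow> cost s' T' \<le> cost s T"
  unfolding cost_def by (intro nn_integral_mono) (auto split: split_indicator intro: mult_left_mono)

lemma cost_LI: "cost a b \<le> line_integral dX (rho_w \<beta>) \<gamma> a b"
  unfolding cost_def line_integral_def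
  by (intro nn_integral_mono) (auto simp: fR_def split: split_indicator)

end


lemma GG_mono:
  fixes \<beta> h B :: real
  assumes "\<beta> > 1" "h \<le> B" shows "GG \<beta> h \<le> GG \<beta> B"
proof -
  consider "B \<le> 1" | "h \<le> 1" "1 < B" | "1 < h" by linarith
  then show ?thesis
  proof cases
    case 1 then show ?thesis using assms by (simp add: GG_def)
  next
    case 2
    have "B powr (1-\<beta>) \<le> B powr 0" using 2 assms by (intro powr_mono) auto
    then have "B powr (1-\<beta>) \<le> 1" using 2 by simp
    then have "0 \<le> (1 - B powr (1-\<beta>))/(\<beta>-1)" using assms by simp
    then show ?thesis using 2 by (simp add: GG_def)
  next
    case 3
    have "B powr (1-\<beta>) \<le> h powr (1-\<beta>)" using 3 assms by (intro powr_mono2') auto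
    then have "(1 - h powr (1-\<beta>))/(\<beta>-1) \<le> (1 - B powr (1-\<beta>))/(\<beta>-1)"
      using assms by (intro divide_right_mono) auto
    then show ?thesis using 3 assms by (simp add: GG_def)
  qed
qed

context curv begin

lemma step_up:
  assumes "a \<le> s" "s \<le> T" "T \<le> b" "y s \<le> h" "h \<le> B" "B \<le> y T" "q \<ge> 1" "max 1 B \<le> q * max 1 h"
  shows "\<exists>u w. s \<le> u \<and> u \<le> w \<and> w \<le> T \<and> y u = h \<and>
           ennreal (q powr (-\<beta>) * (GG \<beta> B - GG \<beta> h)) \<le> cost u w"
proof -
  have yc: "continuous_on {s..T} y" using y_cont by (rule continuous_on_subset) (use assms in auto)
  define K where "K = {s..T} \<inter> y -` {B..}"
  have Kc: "closed K" unfolding K_def by (intro continuous_closed_preimage yc) auto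
  have TK: "T \<in> K" using assms by (auto simp: K_def)
  have Kb: "bdd_below K" unfolding K_def by (auto intro: bdd_belowI[of _ s])
  define w0 where "w0 = Inf K"
  have w0K: "w0 \<in> K" unfolding w0_def using closed_contains_Inf[OF _ Kb Kc] TK by auto
  have below: "y v < B" if v: "s \<le> v" "v < w0" for v
  proof -
    have "v \<le> T" using w0K v by (auto simp: K_def)
    show "y v < B"
    proof (rule ccontr)
      assume "\<not> y v < B" then have "v \<in> K" using v \<open>v \<le> T\<close> by (auto simp: K_def)
      then have "w0 \<le> v" unfolding w0_def by (rule cInf_lower[OF _ Kb])
      then show False using v by simp
    qed
  qed
  have w0: "s \<le> w0" "w0 \<le> T" "B \<le> y w0" using w0K by (auto simp: K_def)
  obtain w where w: "s \<le> w" "w \<le> w0" "y w = B"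
    using IVT'[of y s B w0] w0 assms continuous_on_subset[OF yc, of "{s..w0}"] by auto
  obtain u where u: "s \<le> u" "u \<le> w" "y u = h"
    using IVT'[of y s h w] w assms continuous_on_subset[OF yc, of "{s..w}"] w0 by auto
  have rb: "rr \<beta> B \<le> rho_w \<beta> (\<gamma> t)" if t: "t \<in> {u<..w}" for t
  proof -
    have "y t \<le> B"
    proof (cases "t < w")
      case True then show ?thesis using below[of t] t u w by auto
    next
      case False then have "t = w" using t by auto
      then show ?thesis using w by simp
    qed
    then show "rr \<beta> B \<le> rho_w \<beta> (\<gamma> t)" using beta by (simp add: rho_rr rr_antimono)
  qed
  have 1: "ennreal (rr \<beta> B * dX (\<gamma> u) (\<gamma> w)) \<le> cost u w"
    using assms u w w0 rr_pos[of \<beta> B] by (intro cost_layer rb) (auto simp: less_imp_le)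
  have "q powr (-\<beta>) * (GG \<beta> B - GG \<beta> h) \<le> rr \<beta> B * (B - h)"
    using layer_ineq[of \<beta> q h B] beta assms by auto
  also have "\<dots> \<le> rr \<beta> B * dX (\<gamma> u) (\<gamma> w)"
    using dX_snd[of "\<gamma> u" "\<gamma> w"] u w rr_pos[of \<beta> B] assms by (intro mult_left_mono) auto
  finally have "ennreal (q powr (-\<beta>) * (GG \<beta> B - GG \<beta> h)) \<le> cost u w"
    using 1 by (meson ennreal_leI order_trans)
  then show ?thesis using u w w0 by (intro exI[of _ u] exI[of _ w]) auto
qed

lemma step_down:
  assumes "a \<le> s" "s \<le> T" "T \<le> b" "y T \<le> h" "h \<le> B" "B \<le> y s" "q \<ge> 1" "max 1 B \<le> q * max 1 h"
  shows "\<exists>u w. s \<le> w \<and> w \<le> u \<and> u \<le> T \<and> y u = h \<and>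
           ennreal (q powr (-\<beta>) * (GG \<beta> B - GG \<beta> h)) \<le> cost w u"
proof -
  have yc: "continuous_on {s..T} y" using y_cont by (rule continuous_on_subset) (use assms in auto)
  define K where "K = {s..T} \<inter> y -` {B..}"
  have Kc: "closed K" unfolding K_def by (intro continuous_closed_preimage yc) auto
  have sK: "s \<in> K" using assms by (auto simp: K_def)
  have Kb: "bdd_above K" unfolding K_def by (auto intro: bdd_aboveI[of _ T])
  define w0 where "w0 = Sup K"
  have w0K: "w0 \<in> K" unfolding w0_def using closed_contains_Sup[OF _ Kb Kc] sK by auto
  have above: "y v < B" if v: "w0 < v" "v \<le> T" for v
  proof -
    have "s \<le> v" using w0K v by (auto simp: K_def)
    show "y v < B"
    proof (rule ccontr)
      assume "\<not> y v < B" then have "v \<in> K" using v \<open>s \<le> v\<close> by (auto simp: K_def)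
      then have "v \<le> w0" unfolding w0_def by (rule cSup_upper[OF _ Kb])
      then show False using v by simp
    qed
  qed
  have w0: "s \<le> w0" "w0 \<le> T" "B \<le> y w0" using w0K by (auto simp: K_def)
  obtain w where w: "w0 \<le> w" "w \<le> T" "y w = B"
    using IVT2'[of y T B w0] w0 assms continuous_on_subset[OF yc, of "{w0..T}"] by auto
  obtain u where u: "w \<le> u" "u \<le> T" "y u = h"
    using IVT2'[of y T h w] w assms continuous_on_subset[OF yc, of "{w..T}"] w0 by auto
  have rb: "rr \<beta> B \<le> rho_w \<beta> (\<gamma> t)" if t: "t \<in> {w<..u}" for t
  proof -
    have "y t \<le> B" using above[of t] t u w by auto
    then show "rr \<beta> B \<le> rho_w \<beta> (\<gamma> t)" using beta by (simp add: rho_rr rr_antimono)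
  qed
  have 1: "ennreal (rr \<beta> B * dX (\<gamma> w) (\<gamma> u)) \<le> cost w u"
    using assms u w w0 rr_pos[of \<beta> B] by (intro cost_layer rb) (auto simp: less_imp_le)
  have "q powr (-\<beta>) * (GG \<beta> B - GG \<beta> h) \<le> rr \<beta> B * (B - h)"
    using layer_ineq[of \<beta> q h B] beta assms by auto
  also have "\<dots> \<le> rr \<beta> B * dX (\<gamma> w) (\<gamma> u)"
    using dX_snd[of "\<gamma> w" "\<gamma> u"] u w rr_pos[of \<beta> B] assms by (intro mult_left_mono) auto
  finally have "ennreal (q powr (-\<beta>) * (GG \<beta> B - GG \<beta> h)) \<le> cost w u"
    using 1 by (meson ennreal_leI order_trans)
  then show ?thesis using u w w0 by (intro exI[of _ u] exI[of _ w]) auto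
qed

lemma max_facts:
  fixes q A B :: real and n :: nat
  assumes q: "q \<ge> 1" and "0 \<le> A" "A \<le> B" "max 1 B \<le> q ^ Suc n * max 1 A"
  shows "A \<le> max A (B/q)" "max A (B/q) \<le> B" "max 1 B \<le> q * max 1 (max A (B/q))"
    "max 1 (max A (B/q)) \<le> q ^ n * max 1 A"
proof -
  show "A \<le> max A (B/q)" by simp
  have "B/q \<le> B" using q assms by (simp add: divide_le_eq mult_le_cancel_left1)
  then show "max A (B/q) \<le> B" using assms by simp
  have qn: "1 \<le> q ^ n" using q by simp
  have "B = q * (B/q)" using q by simp
  also have "\<dots> \<le> q * max 1 (max A (B/q))" using q by (intro mult_left_mono) auto
  finally have 1: "B \<le> q * max 1 (max A (B/q))" .
  have "1 * 1 \<le> q * max 1 (max A (B/q))" using q by (intro mult_mono) auto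
  then have "1 \<le> q * max 1 (max A (B/q))" by simp
  with 1 show "max 1 B \<le> q * max 1 (max A (B/q))" by simp
  have "1 * 1 \<le> q ^ n * max 1 A" using qn by (intro mult_mono) auto
  then have m1: "1 \<le> q ^ n * max 1 A" by simp
  have "1 * max 1 A \<le> q ^ n * max 1 A" using qn by (intro mult_right_mono) auto
  then have m2: "A \<le> q ^ n * max 1 A" by simp
  have "B \<le> q * (q ^ n * max 1 A)" using assms by simp
  then have m3: "B/q \<le> q ^ n * max 1 A" using q by (simp add: divide_le_eq mult.commute)
  show "max 1 (max A (B/q)) \<le> q ^ n * max 1 A" using m1 m2 m3 by simp
qed

lemma ennreal_split_sum:
  assumes "\<beta> > 1" "A \<le> h" "h \<le> B" "c \<ge> 0"
  shows "ennreal (c * (GG \<beta> B - GG \<beta> A)) = ennreal (c * (GG \<beta> h - GG \<beta> A)) + ennreal (c * (GG \<beta> B - GG \<beta> h))"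
proof -
  have "GG \<beta> A \<le> GG \<beta> h" "GG \<beta> h \<le> GG \<beta> B" using GG_mono assms by auto
  then have "0 \<le> c * (GG \<beta> h - GG \<beta> A)" "0 \<le> c * (GG \<beta> B - GG \<beta> h)" using assms by auto
  then show ?thesis by (subst ennreal_plus[symmetric]) (auto simp: algebra_simps)
qed

lemma Q_up:
  assumes q: "q \<ge> 1"
  shows "0 \<le> A \<Longrightarrow> A \<le> B \<Longrightarrow> max 1 B \<le> q ^ n * max 1 A \<Longrightarrow> a \<le> s \<Longrightarrow> s \<le> T \<Longrightarrow> T \<le> b \<Longrightarrow>
    y s \<le> A \<Longrightarrow> B \<le> y T \<Longrightarrow> ennreal (q powr (-\<beta>) * (GG \<beta> B - GG \<beta> A)) \<le> cost s T"
proof (induction n arbitrary: A B s T)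
  case 0
  have q1: "1 * max 1 A \<le> q * max 1 A" using q by (intro mult_right_mono) auto
  have m: "max 1 B \<le> 1 * max 1 A" using 0(3) by (simp only: power_0)
  have "max 1 B \<le> q * max 1 A" using order_trans[OF m q1] .
  then obtain u w where uw: "s \<le> u" "u \<le> w" "w \<le> T"
      "ennreal (q powr (-\<beta>) * (GG \<beta> B - GG \<beta> A)) \<le> cost u w"
    using step_up[of s T A B q] 0 q by auto
  then show ?case using cost_mono[of s u w T] by (meson order_trans)
next
  case (Suc n)
  define h where "h = max A (B/q)"
  have hf: "A \<le> h" "h \<le> B" "max 1 B \<le> q * max 1 h" "max 1 h \<le> q ^ n * max 1 A"
    using max_facts[OF q Suc.prems(1,2,3)] by (auto simp: h_def)
  obtain u w where uw: "s \<le> u" "u \<le> w" "w \<le> T" "y u = h"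
      "ennreal (q powr (-\<beta>) * (GG \<beta> B - GG \<beta> h)) \<le> cost u w"
    using step_up[of s T h B q] Suc.prems hf q by auto
  have ih: "ennreal (q powr (-\<beta>) * (GG \<beta> h - GG \<beta> A)) \<le> cost s u"
    using Suc.IH[of A h s u] Suc.prems hf uw by auto
  have "ennreal (q powr (-\<beta>) * (GG \<beta> B - GG \<beta> A)) =
      ennreal (q powr (-\<beta>) * (GG \<beta> h - GG \<beta> A)) + ennreal (q powr (-\<beta>) * (GG \<beta> B - GG \<beta> h))"
    using hf beta by (intro ennreal_split_sum) auto
  also have "\<dots> \<le> cost s u + cost u w" using ih uw by (intro add_mono) auto
  also have "\<dots> \<le> cost s T" using uw by (intro cost_split) auto
  finally show ?case .
qed

lemma Q_down:
  assumes q: "q \<ge> 1"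
  shows "0 \<le> A \<Longrightarrow> A \<le> B \<Longrightarrow> max 1 B \<le> q ^ n * max 1 A \<Longrightarrow> a \<le> s \<Longrightarrow> s \<le> T \<Longrightarrow> T \<le> b \<Longrightarrow>
    B \<le> y s \<Longrightarrow> y T \<le> A \<Longrightarrow> ennreal (q powr (-\<beta>) * (GG \<beta> B - GG \<beta> A)) \<le> cost s T"
proof (induction n arbitrary: A B s T)
  case 0
  have q1: "1 * max 1 A \<le> q * max 1 A" using q by (intro mult_right_mono) auto
  have m: "max 1 B \<le> 1 * max 1 A" using 0(3) by (simp only: power_0)
  have "max 1 B \<le> q * max 1 A" using order_trans[OF m q1] .
  then obtain u w where uw: "s \<le> w" "w \<le> u" "u \<le> T"
      "ennreal (q powr (-\<beta>) * (GG \<beta> B - GG \<beta> A)) \<le> cost w u"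
    using step_down[of s T A B q] 0 q by auto
  then show ?case using cost_mono[of s w u T] by (meson order_trans)
next
  case (Suc n)
  define h where "h = max A (B/q)"
  have hf: "A \<le> h" "h \<le> B" "max 1 B \<le> q * max 1 h" "max 1 h \<le> q ^ n * max 1 A"
    using max_facts[OF q Suc.prems(1,2,3)] by (auto simp: h_def)
  obtain u w where uw: "s \<le> w" "w \<le> u" "u \<le> T" "y u = h"
      "ennreal (q powr (-\<beta>) * (GG \<beta> B - GG \<beta> h)) \<le> cost w u"
    using step_down[of s T h B q] Suc.prems hf q by auto
  have ih: "ennreal (q powr (-\<beta>) * (GG \<beta> h - GG \<beta> A)) \<le> cost u T"
    using Suc.IH[of A h u T] Suc.prems hf uw by auto
  have "ennreal (q powr (-\<beta>) * (GG \<beta> B - GG \<beta> A)) =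
      ennreal (q powr (-\<beta>) * (GG \<beta> h - GG \<beta> A)) + ennreal (q powr (-\<beta>) * (GG \<beta> B - GG \<beta> h))"
    using hf beta by (intro ennreal_split_sum) auto
  also have "\<dots> \<le> cost u T + cost w u" using ih uw by (intro add_mono) auto
  also have "\<dots> = cost w u + cost u T" by (simp add: add.commute)
  also have "\<dots> \<le> cost w T" using uw by (intro cost_split) auto
  also have "\<dots> \<le> cost s T" using uw by (intro cost_mono) auto
  finally show ?case .
qed

lemma Q_up':
  assumes "q > 1" "0 \<le> A" "A \<le> B" "a \<le> s" "s \<le> T" "T \<le> b" "y s \<le> A" "B \<le> y T"
  shows "ennreal (q powr (-\<beta>) * (GG \<beta> B - GG \<beta> A)) \<le> cost s T"
proof -
  obtain n where "max 1 B / max 1 A < q ^ n" using real_arch_pow[OF assms(1)] by blast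
  then have "max 1 B \<le> q ^ n * max 1 A" using pos_divide_less_eq[of "max 1 A" "max 1 B" "q ^ n"] by simp
  then show ?thesis using Q_up[of q A B n s T] assms by auto
qed

lemma Q_down':
  assumes "q > 1" "0 \<le> A" "A \<le> B" "a \<le> s" "s \<le> T" "T \<le> b" "B \<le> y s" "y T \<le> A"
  shows "ennreal (q powr (-\<beta>) * (GG \<beta> B - GG \<beta> A)) \<le> cost s T"
proof -
  obtain n where "max 1 B / max 1 A < q ^ n" using real_arch_pow[OF assms(1)] by blast
  then have "max 1 B \<le> q ^ n * max 1 A" using pos_divide_less_eq[of "max 1 A" "max 1 B" "q ^ n"] by simp
  then show ?thesis using Q_down[of q A B n s T] assms by auto
qed

end

lemma PS_iso:
  assumes iso: "\<forall>s\<in>{lo..hi}. \<forall>t\<in>{lo..hi}. dX (\<gamma> s) (\<gamma> t) = \<bar>s - t\<bar>"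
  shows "sorted ts \<Longrightarrow> set ts \<subseteq> {lo..hi} \<Longrightarrow> PS \<gamma> ts = (if ts = [] then 0 else last ts - hd ts)"
proof (induction ts)
  case Nil then show ?case by simp
next
  case (Cons x xs)
  show ?case
  proof (cases "xs = []")
    case True then show ?thesis by simp
  next
    case False
    have hx: "x \<le> hd xs" using Cons.prems False by (cases xs) auto
    have "hd xs \<in> set xs" using False by simp
    then have "dX (\<gamma> x) (\<gamma> (hd xs)) = \<bar>x - hd xs\<bar>" using iso Cons.prems by auto
    then show ?thesis using Cons False hx by (auto simp: PS_Cons)
  qed
qed

lemma CL_iso:
  assumes iso: "\<forall>s\<in>{lo..hi}. \<forall>t\<in>{lo..hi}. dX (\<gamma> s) (\<gamma> t) = \<bar>s - t\<bar>" and t: "lo \<le> t" "t \<le> hi"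
  shows "curve_length dX \<gamma> lo t = ennreal (t - lo)"
proof (rule antisym)
  show "curve_length dX \<gamma> lo t \<le> ennreal (t - lo)"
  proof (rule CL_le)
    fix ts assume ts: "ts \<in> parts lo t"
    have "sorted ts" "set ts \<subseteq> {lo..hi}" using ts t by (auto simp: parts_def)
    then have "PS \<gamma> ts = (if ts = [] then 0 else last ts - hd ts)"
      by (rule PS_iso[OF iso])
    moreover have "last ts \<le> t \<and> lo \<le> hd ts" if ne: "ts \<noteq> []"
      using ts last_in_set[OF ne] hd_in_set[OF ne] by (auto simp: parts_def)
    ultimately show "PS \<gamma> ts \<le> t - lo" using t by auto
  qed
  have "dX (\<gamma> lo) (\<gamma> t) = t - lo" using iso t by auto
  then show "ennreal (t - lo) \<le> curve_length dX \<gamma> lo t" using CL_ge_dX[OF t(1), of \<gamma>] by simp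
qed

lemma rr_min: "\<beta> \<ge> 0 \<Longrightarrow> rr \<beta> (min u v) = max (rr \<beta> u) (rr \<beta> v)"
  using rr_antimono[of \<beta> u v] rr_antimono[of \<beta> v u] by (auto simp: min_def max_def)

lemma seg_curve:
  fixes x1 x2 :: "'a::metric_space" and y1 y2 \<beta> :: real
  assumes geo: "geodesic_space (UNIV::'a set)" and y: "y1 \<ge> 0" "y2 \<ge> 0" and beta: "\<beta> \<ge> 0"
  shows "\<exists>\<gamma> L. rect_curve dX Xset \<gamma> 0 L \<and> \<gamma> 0 = (x1, y1) \<and> \<gamma> L = (x2, y2) \<and>
     line_integral dX (rho_w \<beta>) \<gamma> 0 L \<le> ennreal (max (rr \<beta> y1) (rr \<beta> y2) * dX (x1, y1) (x2, y2))"
proof -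
  define D where "D = dist x1 x2"
  obtain g where g: "g 0 = x1" "g D = x2" "\<forall>s\<in>{0..D}. \<forall>t\<in>{0..D}. dist (g s) (g t) = \<bar>s - t\<bar>"
    using geo unfolding geodesic_space_def D_def by blast
  define L where "L = max D \<bar>y1 - y2\<bar>"
  have LdX: "L = dX (x1, y1) (x2, y2)" by (simp add: L_def D_def dX_def)
  have L0: "L \<ge> 0" by (simp add: L_def D_def)
  define \<gamma> where "\<gamma> t = (g (t * D / L), y1 + t * (y2 - y1) / L)" for t
  have iso: "\<forall>s\<in>{0..L}. \<forall>t\<in>{0..L}. dX (\<gamma> s) (\<gamma> t) = \<bar>s - t\<bar>"
  proof (intro ballI)
    fix s t assume s: "s \<in> {0..L}" and t: "t \<in> {0..L}"
    show "dX (\<gamma> s) (\<gamma> t) = \<bar>s - t\<bar>"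
    proof (cases "L = 0")
      case True then show ?thesis using s t by simp
    next
      case False
      then have Lp: "L > 0" using L0 by simp
      have D0: "0 \<le> D" by (simp add: D_def)
      have DL: "D \<le> L" by (simp add: L_def)
      have sD: "s * D / L \<in> {0..D}"
      proof -
        have "s * D \<le> L * D" using s D0 by (intro mult_right_mono) auto
        then show ?thesis using s Lp D0 by (auto simp: divide_le_eq mult.commute)
      qed
      have tD: "t * D / L \<in> {0..D}"
      proof -
        have "t * D \<le> L * D" using t D0 by (intro mult_right_mono) auto
        then show ?thesis using t Lp D0 by (auto simp: divide_le_eq mult.commute)
      qed
      define k where "k = \<bar>s - t\<bar> / L"
      have k0: "k \<ge> 0" using Lp by (simp add: k_def)
      have e1: "dist (g (s * D / L)) (g (t * D / L)) = k * D"
        using g(3) sD tD Lp by (simp add: k_def abs_divide diff_divide_distrib[symmetric] left_diff_distrib[symmetric] abs_mult D0)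
      have e2: "\<bar>(y1 + s * (y2 - y1) / L) - (y1 + t * (y2 - y1) / L)\<bar> = k * \<bar>y1 - y2\<bar>"
      proof -
        have "L \<noteq> 0" using Lp by simp
        then have "(y1 + s * (y2 - y1) / L) - (y1 + t * (y2 - y1) / L) = ((s - t) / L) * (y2 - y1)"
          by (simp add: field_simps)
        then show ?thesis using Lp by (simp add: k_def abs_mult abs_minus_commute)
      qed
      have "max (k * D) (k * \<bar>y1 - y2\<bar>) = k * L"
      proof (cases "D \<le> \<bar>y1 - y2\<bar>")
        case True
        then have "k * D \<le> k * \<bar>y1 - y2\<bar>" using k0 by (rule mult_left_mono)
        then show ?thesis using True by (simp add: L_def max_absorb2)
      next
        case False
        then have "k * \<bar>y1 - y2\<bar> \<le> k * D" using k0 by (intro mult_left_mono) auto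
        then show ?thesis using False by (simp add: L_def max_absorb1)
      qed
      also have "\<dots> = \<bar>s - t\<bar>" using Lp by (simp add: k_def)
      finally show ?thesis using e1 e2 by (simp add: dX_def \<gamma>_def)
    qed
  qed
  have g0: "\<gamma> 0 = (x1, y1)" using g by (simp add: \<gamma>_def)
  have gL: "\<gamma> L = (x2, y2)"
  proof (cases "L = 0")
    case True
    have "D \<le> L" "\<bar>y1 - y2\<bar> \<le> L" "0 \<le> D" by (auto simp: L_def D_def)
    then have "D = 0" "y1 = y2" using True by auto
    then have "x1 = x2" by (simp add: D_def)
    then show ?thesis using True g \<open>y1 = y2\<close> by (simp add: \<gamma>_def)
  next
    case False
    then show ?thesis using g by (simp add: \<gamma>_def)
  qed
  have ht: "min y1 y2 \<le> snd (\<gamma> t)" if t: "t \<in> {0..L}" for t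
  proof (cases "L = 0")
    case True then show ?thesis by (simp add: \<gamma>_def)
  next
    case False
    then have Lp: "L > 0" using L0 by simp
    show ?thesis
    proof (cases "y1 \<le> y2")
      case True
      have "0 \<le> t * (y2 - y1) / L" using t True Lp by simp
      then show ?thesis by (simp add: \<gamma>_def)
    next
      case False
      have "L * (y2 - y1) \<le> t * (y2 - y1)" using t False by (intro mult_right_mono_neg) auto
      then have "(y2 - y1) \<le> t * (y2 - y1) / L" using Lp by (simp add: le_divide_eq mult.commute)
      then show ?thesis by (simp add: \<gamma>_def)
    qed
  qed
  have CLL: "curve_length dX \<gamma> 0 L = ennreal L" using CL_iso[OF iso, of L] L0 by simp
  have rc: "rect_curve dX Xset \<gamma> 0 L"
    unfolding rect_curve_def
  proof (intro conjI)
    show "0 \<le> L" by (rule L0)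
    show "curve_cont dX \<gamma> 0 L" unfolding curve_cont_def
      using iso by (metis abs_minus_commute)
    show "\<gamma> ` {0..L} \<subseteq> Xset" using ht y by (force simp: Xset_def)
    show "curve_length dX \<gamma> 0 L < \<infinity>" using CLL by simp
  qed
  define M where "M = max (rr \<beta> y1) (rr \<beta> y2)"
  have M0: "M \<ge> 0" using rr_pos[of \<beta> y1] by (simp add: M_def)
  have rhoM: "rho_w \<beta> (\<gamma> t) \<le> M" if t: "t \<in> {0..L}" for t
    using rr_antimono[OF beta ht[OF t]] rr_min[OF beta, of y1 y2] by (simp add: rho_rr M_def)
  let ?F = "arclen_fun dX \<gamma> 0 L"
  have FL: "?F L = L" using CLL L0 by (simp add: arclen_eq)
  have Fm: "?F (-1) = 0" using L0 by (simp add: arclen_eq CL_zero)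
  have "line_integral dX (rho_w \<beta>) \<gamma> 0 L \<le> (\<integral>\<^sup>+ t. ennreal M * indicator {-1<..L} t \<partial>interval_measure ?F)"
    unfolding line_integral_def
    by (intro nn_integral_mono) (auto split: split_indicator intro!: ennreal_leI rhoM)
  also have "\<dots> = ennreal M * emeasure (interval_measure ?F) {-1<..L}"
    by (rule nn_integral_cmult_indicator) simp
  also have "\<dots> = ennreal M * ennreal L"
    using mu_Ioc[OF rc, of "-1" L] L0 FL Fm by simp
  also have "\<dots> = ennreal (M * L)" using M0 L0 by (simp add: ennreal_mult)
  finally show ?thesis using rc g0 gL by (intro exI[of _ \<gamma>] exI[of _ L]) (auto simp: M_def LdX)
qed

definition II :: "real \<Rightarrow> ('a::metric_space \<times> real) \<Rightarrow> ('a \<times> real) \<Rightarrow> ennreal" where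
  "II \<beta> p q = (INF c \<in> {(\<gamma>, a, b). rect_curve dX Xset \<gamma> a b \<and> \<gamma> a = p \<and> \<gamma> b = q}.
                 (case c of (\<gamma>, a, b) \<Rightarrow> line_integral dX (rho_w \<beta>) \<gamma> a b))"

lemma d_rho_II: "d_rho \<beta> p q = enn2real (II \<beta> p q)"
  by (simp add: d_rho_def d_weighted_def II_def)

lemma II_upper:
  fixes p q :: "'a::metric_space \<times> real"
  assumes geo: "geodesic_space (UNIV::'a set)" and "snd p \<ge> 0" "snd q \<ge> 0" "\<beta> \<ge> 0"
  shows "II \<beta> p q \<le> ennreal (max (rr \<beta> (snd p)) (rr \<beta> (snd q)) * dX p q)"
proof -
  obtain \<gamma> L where c: "rect_curve dX Xset \<gamma> 0 L" "\<gamma> 0 = p" "\<gamma> L = q"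
    "line_integral dX (rho_w \<beta>) \<gamma> 0 L \<le> ennreal (max (rr \<beta> (snd p)) (rr \<beta> (snd q)) * dX p q)"
    using seg_curve[OF geo, of "snd p" "snd q" \<beta> "fst p" "fst q"] assms by auto
  have "II \<beta> p q \<le> line_integral dX (rho_w \<beta>) \<gamma> 0 L"
    unfolding II_def using c by (intro INF_lower2[of "(\<gamma>, 0, L)"]) auto
  then show ?thesis using c(4) by simp
qed

lemma II_fin:
  fixes p q :: "'a::metric_space \<times> real"
  assumes geo: "geodesic_space (UNIV::'a set)" and "snd p \<ge> 0" "snd q \<ge> 0" "\<beta> \<ge> 0"
  shows "II \<beta> p q < \<infinity>"
  using II_upper[OF assms] by (simp add: top.not_eq_extremum order_le_less_trans)

lemma d_rho_upper:
  fixes p q :: "'a::metric_space \<times> real"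
  assumes geo: "geodesic_space (UNIV::'a set)" and "snd p \<ge> 0" "snd q \<ge> 0" "\<beta> \<ge> 0"
  shows "d_rho \<beta> p q \<le> max (rr \<beta> (snd p)) (rr \<beta> (snd q)) * dX p q"
proof -
  have "d_rho \<beta> p q \<le> enn2real (ennreal (max (rr \<beta> (snd p)) (rr \<beta> (snd q)) * dX p q))"
    unfolding d_rho_II by (intro enn2real_mono II_upper[OF assms]) auto
  also have "\<dots> = max (rr \<beta> (snd p)) (rr \<beta> (snd q)) * dX p q"
    using rr_pos[of \<beta> "snd p"] dX_nonneg[of p q] by (intro enn2real_ennreal) auto
  finally show ?thesis .
qed

lemma d_rho_lower:
  assumes fin: "II \<beta> p q < \<infinity>" and v: "v \<ge> 0"
    and all: "\<And>\<gamma> a b. rect_curve dX Xset \<gamma> a b \<Longrightarrow> \<gamma> a = p \<Longrightarrow> \<gamma> b = q \<Longrightarrow>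
               ennreal v \<le> line_integral dX (rho_w \<beta>) \<gamma> a b"
  shows "v \<le> d_rho \<beta> p q"
proof -
  have "ennreal v \<le> II \<beta> p q" unfolding II_def by (rule INF_greatest) (auto intro: all)
  then have "enn2real (ennreal v) \<le> enn2real (II \<beta> p q)" using fin by (intro enn2real_mono) auto
  then show ?thesis using v by (simp add: d_rho_II)
qed

lemma ball_curve:
  assumes fin: "II \<beta> p q < \<infinity>" and lt: "d_rho \<beta> p q < R"
  shows "\<exists>\<gamma> a b. rect_curve dX Xset \<gamma> a b \<and> \<gamma> a = p \<and> \<gamma> b = q \<and>
          line_integral dX (rho_w \<beta>) \<gamma> a b < ennreal R"
proof -
  have "II \<beta> p q = ennreal (d_rho \<beta> p q)" using fin by (simp add: d_rho_II ennreal_enn2real_if)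
  also have "\<dots> < ennreal R"
  proof (rule ennreal_lessI)
    have "0 \<le> d_rho \<beta> p q" by (simp add: d_rho_II)
    then show "0 < R" using lt by simp
  qed (rule lt)
  finally show ?thesis unfolding II_def INF_less_iff by auto
qed


lemma rr_meas[measurable]: "\<beta> \<ge> 0 \<Longrightarrow> rr \<beta> \<in> borel_measurable borel"
proof -
  assume b: "\<beta> \<ge> 0"
  have "continuous_on UNIV (\<lambda>t::real. (max 1 t) powr (-\<beta>))"
    by (intro continuous_intros) auto
  then have "(\<lambda>t::real. (max 1 t) powr (-\<beta>)) \<in> borel_measurable borel"
    by (rule borel_measurable_continuous_onI)
  moreover have "rr \<beta> = (\<lambda>t::real. (max 1 t) powr (-\<beta>))" using b by (simp add: fun_eq_iff rr_max)
  ultimately show ?thesis by simp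
qed

lemma rr_le1: "\<beta> \<ge> 0 \<Longrightarrow> rr \<beta> t \<le> 1"
proof -
  assume b: "\<beta> \<ge> 0"
  have "(max 1 t) powr (-\<beta>) \<le> (max 1 t) powr 0" using b by (intro powr_mono) auto
  moreover have "max 1 t \<noteq> 0" by (simp add: max_def)
  ultimately show ?thesis using b by (simp add: rr_max)
qed

lemma tail_integral:
  fixes \<beta> m :: real
  assumes b: "\<beta> > 1" and m: "m \<ge> 1"
  shows "(\<integral>\<^sup>+ t. ennreal (rr \<beta> t) * indicator {m..} t \<partial>lborel) = ennreal (m powr (1-\<beta>) / (\<beta>-1))"
proof -
  have "(\<integral>\<^sup>+ t. ennreal (rr \<beta> t) * indicator {m..} t \<partial>lborel)
      = (\<integral>\<^sup>+ t. ennreal (t powr (-\<beta>)) * indicator {m..} t \<partial>lborel)"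
  proof (intro nn_integral_cong)
    fix t :: real
    show "ennreal (rr \<beta> t) * indicator {m..} t = ennreal (t powr (-\<beta>)) * indicator {m..} t"
    proof (cases "m \<le> t")
      case True
      then have "rr \<beta> t = t powr (-\<beta>)" using m by (cases "t = 1") (auto simp: rr_def)
      then show ?thesis by simp
    qed simp
  qed
  also have "\<dots> = ennreal (0 - (- (m powr (1-\<beta>) / (\<beta>-1))))"
  proof (rule nn_integral_FTC_atLeast)
    show "(\<lambda>t::real. t powr (-\<beta>)) \<in> borel_measurable borel" by measurable
    fix x :: real assume x: "m \<le> x"
    then have xp: "x > 0" using m by simp
    have "((\<lambda>t. t powr (1-\<beta>)) has_real_derivative (1-\<beta>) * x powr (1-\<beta>-1)) (at x)"
      by (rule has_real_derivative_powr[OF xp])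
    then have "((\<lambda>t. - (t powr (1-\<beta>) / (\<beta>-1))) has_real_derivative - ((1-\<beta>) * x powr (1-\<beta>-1) / (\<beta>-1))) (at x)"
      by (intro DERIV_minus DERIV_cdivide)
    moreover have "- ((1-\<beta>) * x powr (1-\<beta>-1) / (\<beta>-1)) = x powr (-\<beta>)" using b by (simp add: field_simps)
    ultimately show "((\<lambda>t. - (t powr (1-\<beta>) / (\<beta>-1))) has_real_derivative x powr (-\<beta>)) (at x)" by simp
    show "0 \<le> x powr (-\<beta>)" by simp
  next
    have "((\<lambda>t::real. t powr (1-\<beta>)) \<longlongrightarrow> 0) at_top"
      using b by (intro tendsto_neg_powr filterlim_ident) auto
    then have "((\<lambda>t::real. - (t powr (1-\<beta>) / (\<beta>-1))) \<longlongrightarrow> - (0 / (\<beta>-1))) at_top"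
      using b by (intro tendsto_intros) auto
    then show "((\<lambda>t::real. - (t powr (1-\<beta>) / (\<beta>-1))) \<longlongrightarrow> 0) at_top" by simp
  qed
  finally show ?thesis by simp
qed

lemma d_rho_inf_le:
  fixes \<beta> y0 :: real and x0 :: "'a::metric_space"
  assumes b: "\<beta> > 1"
  shows "d_rho_inf \<beta> (x0, y0) \<le> (1 + 1/(\<beta>-1)) - GG \<beta> y0"
proof -
  define m where "m = max 1 y0"
  have m1: "m \<ge> 1" "y0 \<le> m" by (auto simp: m_def)
  have "(\<integral>\<^sup>+ t \<in> {y0..}. ennreal (rho_w \<beta> (x0, t)) \<partial>lborel)
      \<le> (\<integral>\<^sup>+ t. ennreal (rr \<beta> t) * indicator {y0..m} t + ennreal (rr \<beta> t) * indicator {m..} t \<partial>lborel)"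
    by (intro nn_integral_mono) (auto simp: rho_rr split: split_indicator)
  also have "\<dots> = (\<integral>\<^sup>+ t. ennreal (rr \<beta> t) * indicator {y0..m} t \<partial>lborel) +
                 (\<integral>\<^sup>+ t. ennreal (rr \<beta> t) * indicator {m..} t \<partial>lborel)"
    using b by (intro nn_integral_add) auto
  also have "(\<integral>\<^sup>+ t. ennreal (rr \<beta> t) * indicator {y0..m} t \<partial>lborel) \<le> (\<integral>\<^sup>+ t. ennreal 1 * indicator {y0..m} t \<partial>lborel)"
    using rr_le1[of \<beta>] b by (intro nn_integral_mono) (auto split: split_indicator)
  also have "\<dots> = ennreal (m - y0)" using m1 by (simp add: nn_integral_cmult_indicator)
  also have "(\<integral>\<^sup>+ t. ennreal (rr \<beta> t) * indicator {m..} t \<partial>lborel) = ennreal (m powr (1-\<beta>) / (\<beta>-1))"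
    using tail_integral[OF b m1(1)] .
  also have "ennreal (m - y0) + ennreal (m powr (1-\<beta>) / (\<beta>-1)) = ennreal ((m - y0) + m powr (1-\<beta>) / (\<beta>-1))"
    using m1 b by (intro ennreal_plus[symmetric]) auto
  also have "(m - y0) + m powr (1-\<beta>) / (\<beta>-1) = (1 + 1/(\<beta>-1)) - GG \<beta> y0"
  proof (cases "y0 \<le> 1")
    case True then show ?thesis by (simp add: m_def GG_def)
  next
    case False then show ?thesis using b by (simp add: m_def GG_def diff_divide_distrib)
  qed
  finally have I: "(\<integral>\<^sup>+ t \<in> {y0..}. ennreal (rho_w \<beta> (x0, t)) \<partial>lborel) \<le> ennreal ((1 + 1/(\<beta>-1)) - GG \<beta> y0)" by simp
  have "d_rho_inf \<beta> (x0, y0) \<le> enn2real (ennreal ((1 + 1/(\<beta>-1)) - GG \<beta> y0))"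
    unfolding d_rho_inf_def using I by (intro enn2real_mono) auto
  also have "\<dots> = (1 + 1/(\<beta>-1)) - GG \<beta> y0"
  proof (rule enn2real_ennreal)
    show "0 \<le> (1 + 1/(\<beta>-1)) - GG \<beta> y0"
    proof (cases "y0 \<le> 1")
      case True
      have "0 \<le> 1/(\<beta>-1)" using b by simp
      moreover have "GG \<beta> y0 = y0" using True by (simp add: GG_def)
      ultimately show ?thesis using True by linarith
    next
      case False
      have "0 \<le> y0 powr (1-\<beta>) / (\<beta>-1)" using b by simp
      then show ?thesis using False b by (simp add: GG_def diff_divide_distrib)
    qed
  qed
  finally show ?thesis .
qed


definition Kc :: "real \<Rightarrow> real" where "Kc \<beta> = 5 powr (1/(\<beta>-1))"
definition qc :: "real \<Rightarrow> real" where "qc \<beta> = (3/2) powr (1/\<beta>)"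
definition Gt :: "real \<Rightarrow> real" where "Gt \<beta> = 1 + 1/(\<beta>-1)"

lemma kconsts:
  fixes \<beta> :: real assumes b: "\<beta> > 1"
  shows "qc \<beta> > 1" "qc \<beta> powr (-\<beta>) = 2/3" "Kc \<beta> \<ge> 1" "Kc \<beta> > 0" "Kc \<beta> powr (1-\<beta>) = 1/5"
proof -
  show "qc \<beta> > 1" using b unfolding qc_def by (intro gr_one_powr) auto
  have "qc \<beta> powr (-\<beta>) = (3/2) powr (1/\<beta> * (-\<beta>))" unfolding qc_def by (simp add: powr_powr)
  also have "1/\<beta> * (-\<beta>) = -1" using b by simp
  finally show "qc \<beta> powr (-\<beta>) = 2/3" by (simp add: powr_minus_divide)
  show "Kc \<beta> \<ge> 1" using b unfolding Kc_def by (intro ge_one_powr_ge_zero) auto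
  then show "Kc \<beta> > 0" by simp
  have "Kc \<beta> powr (1-\<beta>) = 5 powr (1/(\<beta>-1) * (1-\<beta>))" unfolding Kc_def by (simp add: powr_powr)
  also have "1/(\<beta>-1) * (1-\<beta>) = -1" using b by (simp add: field_simps)
  finally show "Kc \<beta> powr (1-\<beta>) = 1/5" by (simp add: powr_minus_divide)
qed

lemma GG_ge1: "\<beta> > 1 \<Longrightarrow> h \<ge> 1 \<Longrightarrow> GG \<beta> h = Gt \<beta> - h powr (1-\<beta>)/(\<beta>-1)"
  by (cases "h = 1") (auto simp: GG_def Gt_def diff_divide_distrib)

lemma X_ge: "\<beta> > 1 \<Longrightarrow> Gt \<beta> - GG \<beta> y0 \<ge> (max 1 y0) powr (1-\<beta>)/(\<beta>-1)"
proof -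
  assume b: "\<beta> > 1"
  show ?thesis
  proof (cases "y0 \<le> 1")
    case True
    then show ?thesis by (simp add: GG_def Gt_def max_def)
  next
    case False
    then show ?thesis using GG_ge1[OF b, of y0] by (simp add: max_def)
  qed
qed

lemma X_eq: "\<beta> > 1 \<Longrightarrow> y0 \<ge> 1 \<Longrightarrow> Gt \<beta> - GG \<beta> y0 = y0 powr (1-\<beta>)/(\<beta>-1)"
  using GG_ge1 by simp

lemma m_pow: "(m::real) \<ge> 1 \<Longrightarrow> m powr (1-\<beta>) = m * m powr (-\<beta>)"
  using powr_add[of m 1 "-\<beta>"] by simp

lemma enn_less_real: "ennreal x < ennreal R \<Longrightarrow> x < R"
  by (metis ennreal_le_iff2 ennreal_less_zero_iff le_less_linear not_less order.strict_trans1 ennreal_leI)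


definition kap :: "real \<Rightarrow> real \<Rightarrow> real" where
  "kap \<beta> Dz = min (1/(Kc \<beta> powr \<beta> * Kc \<beta> powr \<beta>)) (8/(75*(\<beta>-1)*(Dz + Kc \<beta>)))"

lemma cancelB: "(B::real) \<noteq> 0 \<Longrightarrow> c/(A*B) * (B*M) = c*M/A"
  by (cases "A = 0") (simp_all add: field_simps)

context curv begin

lemma ball_heights:
  assumes y0: "y0 \<ge> 0" and ga: "y a = y0" and LI: "line_integral dX (rho_w \<beta>) \<gamma> a b < ennreal R"
    and R: "R > 0" "2 * R \<le> Gt \<beta> - GG \<beta> y0" and v: "v \<in> {a..b}"
  shows "y v \<le> Kc \<beta> * max 1 y0" "max 1 y0 / Kc \<beta> \<le> max 1 (y v)"
proof -
  define K where "K = Kc \<beta>"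
  define q where "q = qc \<beta>"
  define m0 where "m0 = max 1 y0"
  define X where "X = Gt \<beta> - GG \<beta> y0"
  define M where "M = m0 powr (1-\<beta>)"
  define P where "P = M / (\<beta>-1)"
  note kc = kconsts[OF beta, folded K_def q_def]
  have costR: "cost a b < ennreal R" using cost_LI LI by (rule le_less_trans)
  have m0: "m0 \<ge> 1" "y0 \<le> m0" by (auto simp: m0_def)
  have PX: "P \<le> X" using X_ge[OF beta, of y0] by (simp add: P_def M_def m0_def X_def)
  have P0: "P > 0" using beta m0 by (simp add: P_def M_def)
  show "y v \<le> Kc \<beta> * max 1 y0"
  proof (rule ccontr)
    assume "\<not> y v \<le> Kc \<beta> * max 1 y0"
    then have yv: "K * m0 \<le> y v" by (simp add: K_def m0_def)
    have Km: "m0 \<le> K * m0" using kc m0 by (simp add: mult_le_cancel_right1)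
    have y0K: "y0 \<le> K*m0" using m0 Km by linarith
    have "ennreal (q powr (-\<beta>) * (GG \<beta> (K*m0) - GG \<beta> y0)) \<le> cost a v"
      using kc y0K y0 v ga yv by (intro Q_up') auto
    also have "\<dots> \<le> cost a b" using v by (intro cost_mono) auto
    also note costR
    finally have lt: "2/3 * (GG \<beta> (K*m0) - GG \<beta> y0) < R" using kc by (auto dest: enn_less_real)
    have "(K*m0) powr (1-\<beta>) = K powr (1-\<beta>) * M" using kc m0 by (simp add: powr_mult M_def)
    then have "(K*m0) powr (1-\<beta>) = M/5" using kc by simp
    moreover have "1 \<le> K*m0" using Km m0 by linarith
    then have "GG \<beta> (K*m0) = Gt \<beta> - (K*m0) powr (1-\<beta>)/(\<beta>-1)" by (rule GG_ge1[OF beta])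
    ultimately have "GG \<beta> (K*m0) = Gt \<beta> - (M/5)/(\<beta>-1)" by (simp only:)
    moreover have "(M/5)/(\<beta>-1) = P/5" by (simp add: P_def)
    ultimately have "GG \<beta> (K*m0) = Gt \<beta> - P/5" by simp
    then show False using lt[unfolded right_diff_distrib] R PX P0 unfolding X_def by linarith
  qed
  show "max 1 y0 / Kc \<beta> \<le> max 1 (y v)"
  proof (rule ccontr)
    assume "\<not> max 1 y0 / Kc \<beta> \<le> max 1 (y v)"
    then have lt1: "max 1 (y v) < m0 / K" unfolding K_def m0_def by (rule not_le_imp_less)
    then have "1 < m0 / K" using max.cobounded1[of 1 "y v"] by linarith
    then have "K < m0" using kc by (simp add: less_divide_eq)
    then have my: "m0 = y0" "y0 > K" using kc by (auto simp: m0_def max_def split: if_splits)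
    have "m0 / K = y0 / K" using my by simp
    then have yvl: "y v \<le> y0 / K" using lt1 max.cobounded2[of "y v" 1] by linarith
    have yK: "y0 / K \<le> y0" using kc y0 by (simp add: divide_le_eq mult_le_cancel_left1)
    have yK1: "1 \<le> y0 / K" using my kc by (simp add: le_divide_eq)
    have "ennreal (q powr (-\<beta>) * (GG \<beta> y0 - GG \<beta> (y0/K))) \<le> cost a v"
      using kc y0 yK v ga yvl by (intro Q_down') auto
    also have "\<dots> \<le> cost a b" using v by (intro cost_mono) auto
    also note costR
    finally have lt: "2/3 * (GG \<beta> y0 - GG \<beta> (y0/K)) < R" using kc by (auto dest: enn_less_real)
    have "(y0/K) powr (1-\<beta>) = y0 powr (1-\<beta>) / K powr (1-\<beta>)" using y0 kc by (simp add: powr_divide)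
    then have e: "(y0/K) powr (1-\<beta>) = 5 * M" using kc my by (simp add: M_def)
    have "GG \<beta> (y0/K) = Gt \<beta> - (y0/K) powr (1-\<beta>)/(\<beta>-1)" using yK1 by (intro GG_ge1 beta)
    then have g1: "GG \<beta> (y0/K) = Gt \<beta> - 5 * P" using e by (simp add: P_def)
    have g2: "GG \<beta> y0 = Gt \<beta> - P" using GG_ge1[OF beta, of y0] my kc by (simp add: P_def M_def)
    show False using lt[unfolded right_diff_distrib] R g1 g2 P0 unfolding X_def by linarith
  qed
qed

lemma LB:
  assumes y0: "y0 \<ge> 0" and Dz: "\<And>x x'::'a. dist x x' \<le> Dz" "Dz \<ge> 0"
    and ha: "0 \<le> y a" "y a \<le> Kc \<beta> * max 1 y0" and hb: "0 \<le> y b" "y b \<le> Kc \<beta> * max 1 y0"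
  shows "ennreal (kap \<beta> Dz * rr \<beta> y0 * dX (\<gamma> a) (\<gamma> b)) \<le> line_integral dX (rho_w \<beta>) \<gamma> a b"
proof -
  define K where "K = Kc \<beta>"
  define q where "q = qc \<beta>"
  define m0 where "m0 = max 1 y0"
  define M where "M = m0 powr (1-\<beta>)"
  define r0 where "r0 = m0 powr (-\<beta>)"
  define Kb where "Kb = K powr \<beta>"
  define d where "d = dX (\<gamma> a) (\<gamma> b)"
  define H2 where "H2 = K * K * m0"
  note kc = kconsts[OF beta, folded K_def q_def]
  have m0: "m0 \<ge> 1" by (simp add: m0_def)
  have r0: "rr \<beta> y0 = r0" using beta by (simp add: rr_max r0_def m0_def)
  have r0p: "r0 > 0" using m0 by (simp add: r0_def)
  have Mr: "M = m0 * r0" using m_pow[OF m0] by (simp add: M_def r0_def)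
  have Kb: "Kb \<ge> 1" using kc beta by (simp add: Kb_def ge_one_powr_ge_zero)
  have d0: "d \<ge> 0" by (simp add: d_def dX_nonneg)
  have Km: "m0 \<le> K * m0" using kc m0 by (simp add: mult_le_cancel_right1)
  have KH: "K * m0 \<le> H2" using kc m0 Km by (simp add: H2_def mult_le_cancel_right1)
  have H1: "H2 \<ge> 1" using KH Km m0 by linarith
  have dle: "d \<le> Dz + K * m0"
  proof -
    have "dist (fst (\<gamma> a)) (fst (\<gamma> b)) \<le> Dz + K * m0" using Dz(1)[of "fst (\<gamma> a)" "fst (\<gamma> b)"] Km m0 by linarith
    moreover have "\<bar>y a - y b\<bar> \<le> Dz + K * m0" using ha hb Dz(2) by (auto simp: K_def m0_def)
    ultimately show ?thesis by (simp add: d_def dX_def)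
  qed
  have "Kc \<beta> \<ge> 1" using kc by (simp add: K_def)
  then have p: "0 < 75*(\<beta>-1)*(Dz + Kc \<beta>)" using beta Dz(2) by (intro mult_pos_pos) auto
  have p1: "0 \<le> 1/(Kc \<beta> powr \<beta> * Kc \<beta> powr \<beta>)" by simp
  have p2: "0 \<le> 8/(75*(\<beta>-1)*(Dz + Kc \<beta>))" using p by simp
  have kap0: "kap \<beta> Dz \<ge> 0" using p1 p2 by (simp add: kap_def)
  have LIc: "cost a b \<le> line_integral dX (rho_w \<beta>) \<gamma> a b" by (rule cost_LI)
  show ?thesis
  proof (cases "\<forall>v\<in>{a..b}. y v \<le> H2")
    case True
    have "ennreal (rr \<beta> H2 * d) \<le> cost a b" unfolding d_def
    proof (rule cost_layer)
      show "a \<le> a" "a \<le> b" "b \<le> b" using ab by auto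
      show "0 \<le> rr \<beta> H2" using rr_pos[of \<beta> H2] by simp
      fix t assume "t \<in> {a<..b}"
      then have "y t \<le> H2" using True by auto
      then show "rr \<beta> H2 \<le> rho_w \<beta> (\<gamma> t)" using beta by (simp add: rho_rr rr_antimono)
    qed
    moreover have "kap \<beta> Dz * r0 * d \<le> rr \<beta> H2 * d"
    proof -
      have "rr \<beta> H2 = H2 powr (-\<beta>)" using H1 beta by (simp add: rr_max max_absorb2)
      also have "\<dots> = (K * K) powr (-\<beta>) * r0" using kc m0 by (simp add: H2_def powr_mult r0_def)
      also have "(K * K) powr (-\<beta>) = 1 / (Kb * Kb)" using kc by (simp add: powr_mult Kb_def powr_minus_divide)
      finally have e: "rr \<beta> H2 = r0 / (Kb * Kb)" by simp
      have "kap \<beta> Dz \<le> 1 / (Kb * Kb)" by (simp add: kap_def Kb_def K_def)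
      then have "kap \<beta> Dz * (r0 * d) \<le> 1 / (Kb * Kb) * (r0 * d)" using r0p d0 by (intro mult_right_mono) auto
      then show ?thesis using e by (simp add: mult.assoc)
    qed
    ultimately show ?thesis using LIc r0 unfolding d_def[symmetric]
      by (meson ennreal_leI order_trans)
  next
    case False
    then obtain v where v: "v \<in> {a..b}" "H2 < y v" by auto
    have "ennreal (q powr (-\<beta>) * (GG \<beta> H2 - GG \<beta> (K*m0))) \<le> cost a v"
      using kc m0 KH ha v by (intro Q_up') (auto simp: K_def m0_def)
    also have "\<dots> \<le> cost a b" using v by (intro cost_mono) auto
    finally have c1: "ennreal (2/3 * (GG \<beta> H2 - GG \<beta> (K*m0))) \<le> cost a b" using kc by simp
    have e1: "(K*m0) powr (1-\<beta>) = M/5" using kc m0 by (simp add: powr_mult M_def)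
    have "H2 powr (1-\<beta>) = K powr (1-\<beta>) * (K*m0) powr (1-\<beta>)" using kc m0 by (simp add: H2_def mult.assoc powr_mult)
    also have "\<dots> = 1/5 * (M/5)" unfolding e1 kc(5) ..
    finally have e2: "H2 powr (1-\<beta>) = M/25" by simp
    have "1 \<le> K*m0" using Km m0 by linarith
    have ga1: "GG \<beta> (K*m0) = Gt \<beta> - (M/5)/(\<beta>-1)"
      using GG_ge1[OF beta \<open>1 \<le> K*m0\<close>] unfolding e1 .
    have ga2: "GG \<beta> H2 = Gt \<beta> - (M/25)/(\<beta>-1)"
      using GG_ge1[OF beta H1] unfolding e2 .
    define Mb where "Mb = M/(\<beta>-1)"
    have h1: "(M/5)/(\<beta>-1) = Mb/5" by (simp add: Mb_def)
    have h2: "(M/25)/(\<beta>-1) = Mb/25" by (simp add: Mb_def)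
    have ga1': "GG \<beta> (K*m0) = Gt \<beta> - Mb/5" using ga1 unfolding h1 .
    have ga2': "GG \<beta> H2 = Gt \<beta> - Mb/25" using ga2 unfolding h2 .
    have "GG \<beta> H2 - GG \<beta> (K*m0) = (4/25) * Mb"
      using ga1' ga2' by linarith
    then have g: "GG \<beta> H2 - GG \<beta> (K*m0) = (4/25) * (M / (\<beta>-1))" by (simp add: Mb_def)
    have "kap \<beta> Dz * r0 * d \<le> 2/3 * (GG \<beta> H2 - GG \<beta> (K*m0))"
    proof -
      have DK: "Dz + K > 0" using Dz kc by simp
      have "r0 * d \<le> r0 * (Dz + K * m0)" using dle r0p by (intro mult_left_mono) auto
      also have "\<dots> = r0 * Dz + K * M" by (simp add: Mr algebra_simps)
      also have "r0 * Dz \<le> M * Dz"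
        using Mr m0 r0p Dz(2) by (intro mult_right_mono) (auto simp: mult_le_cancel_right1)
      finally have rd: "r0 * d \<le> (Dz + K) * M" by (simp add: algebra_simps)
      have kb: "kap \<beta> Dz \<le> 8/(75*(\<beta>-1)*(Dz + K))" by (simp add: kap_def K_def)
      have "0 < 75*(\<beta>-1)*(Dz + K)" using DK beta by (intro mult_pos_pos) auto
      then have pp: "0 \<le> 8/(75*(\<beta>-1)*(Dz + K))" by simp
      have "0 \<le> r0 * d" using r0p d0 by simp
      then have "kap \<beta> Dz * (r0 * d) \<le> 8/(75*(\<beta>-1)*(Dz + K)) * ((Dz + K) * M)"
        using mult_mono[OF kb rd pp] by simp
      also have "\<dots> = 8 * M / (75*(\<beta>-1))" using DK by (intro cancelB) auto
      also have "\<dots> = 2/3 * ((4/25) * (M / (\<beta>-1)))" by simp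
      finally show ?thesis using g by (simp add: mult.assoc)
    qed
    then show ?thesis using c1 LIc r0 unfolding d_def[symmetric]
      by (meson ennreal_leI order_trans)
  qed
qed

end

lemma DN0:
  fixes \<beta> K y0 h B :: real
  assumes b: "\<beta> > 1" and K: "K \<ge> 1" and y0: "y0 > 0" and hB: "0 < h" "h \<le> B"
    and l: "y0 / K \<le> h" and u: "B \<le> K * y0"
  shows "(h powr (1-\<beta>) - B powr (1-\<beta>))/(\<beta>-1) \<le> K powr \<beta> * y0 powr (-\<beta>) * (B - h)"
    "y0 powr (-\<beta>) * (B - h) / K powr \<beta> \<le> (h powr (1-\<beta>) - B powr (1-\<beta>))/(\<beta>-1)"
proof -
  have B0: "B > 0" using hB by simp
  have b1: "h powr (1-\<beta>) + (\<beta>-1) * h powr (-\<beta>) * (h - B) \<le> B powr (1-\<beta>)"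
    using Bern[OF b B0 hB(1)] .
  have b2: "B powr (1-\<beta>) + (\<beta>-1) * B powr (-\<beta>) * (B - h) \<le> h powr (1-\<beta>)"
    using Bern[OF b hB(1) B0] .
  have yK0: "0 < y0 / K" using y0 K by simp
  have "h powr (-\<beta>) \<le> (y0 / K) powr (-\<beta>)" using l yK0 b by (intro powr_mono2') auto
  also have "\<dots> = K powr \<beta> * y0 powr (-\<beta>)" using y0 K by (simp add: powr_divide powr_minus_divide)
  finally have hb: "h powr (-\<beta>) \<le> K powr \<beta> * y0 powr (-\<beta>)" .
  have "(K * y0) powr (-\<beta>) \<le> B powr (-\<beta>)" using u B0 b by (intro powr_mono2') auto
  moreover have "(K * y0) powr (-\<beta>) = y0 powr (-\<beta>) / K powr \<beta>" using y0 K by (simp add: powr_mult powr_minus_divide)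
  ultimately have Bb: "y0 powr (-\<beta>) / K powr \<beta> \<le> B powr (-\<beta>)" by simp
  have Bh: "0 \<le> B - h" using hB by simp
  have "h powr (1-\<beta>) - B powr (1-\<beta>) \<le> (\<beta>-1) * (h powr (-\<beta>) * (B - h))"
    using b1 by (simp add: algebra_simps)
  also have "\<dots> \<le> (\<beta>-1) * (K powr \<beta> * y0 powr (-\<beta>) * (B - h))"
    using hb Bh b by (intro mult_left_mono mult_right_mono) auto
  finally show "(h powr (1-\<beta>) - B powr (1-\<beta>))/(\<beta>-1) \<le> K powr \<beta> * y0 powr (-\<beta>) * (B - h)"
    using b by (simp add: divide_le_eq mult.commute)
  have "(\<beta>-1) * (y0 powr (-\<beta>) / K powr \<beta> * (B - h)) \<le> (\<beta>-1) * (B powr (-\<beta>) * (B - h))"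
    using Bb Bh b by (intro mult_left_mono mult_right_mono) auto
  also have "\<dots> \<le> h powr (1-\<beta>) - B powr (1-\<beta>)" using b2 by (simp add: algebra_simps)
  finally have "(\<beta>-1) * (y0 powr (-\<beta>) * (B - h) / K powr \<beta>) \<le> h powr (1-\<beta>) - B powr (1-\<beta>)" by simp
  then show "y0 powr (-\<beta>) * (B - h) / K powr \<beta> \<le> (h powr (1-\<beta>) - B powr (1-\<beta>))/(\<beta>-1)"
    using b by (simp add: le_divide_eq mult.commute)
qed

lemma DN:
  fixes \<beta> K y0 y :: real
  assumes b: "\<beta> > 1" and K: "K \<ge> 1" and y0: "y0 \<ge> 1" and y: "y > 1"
    and l: "y0 / K \<le> y" and u: "y \<le> K * y0"
  shows "\<bar>y0 powr (1-\<beta>) - y powr (1-\<beta>)\<bar>/(\<beta>-1) \<le> K powr \<beta> * y0 powr (-\<beta>) * \<bar>y - y0\<bar>"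
    "y0 powr (-\<beta>) * \<bar>y - y0\<bar> / K powr \<beta> \<le> \<bar>y0 powr (1-\<beta>) - y powr (1-\<beta>)\<bar>/(\<beta>-1)"
proof -
  have y0K: "y0 / K \<le> y0" "y0 \<le> K * y0" using K y0 by (auto simp: divide_le_eq mult_le_cancel_right1)
  have "\<bar>y0 powr (1-\<beta>) - y powr (1-\<beta>)\<bar>/(\<beta>-1) \<le> K powr \<beta> * y0 powr (-\<beta>) * \<bar>y - y0\<bar> \<and>
        y0 powr (-\<beta>) * \<bar>y - y0\<bar> / K powr \<beta> \<le> \<bar>y0 powr (1-\<beta>) - y powr (1-\<beta>)\<bar>/(\<beta>-1)"
  proof (cases "y \<le> y0")
    case True
    have "y0 powr (1-\<beta>) \<le> y powr (1-\<beta>)" using True y b by (intro powr_mono2') auto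
    then have e: "\<bar>y0 powr (1-\<beta>) - y powr (1-\<beta>)\<bar> = y powr (1-\<beta>) - y0 powr (1-\<beta>)" "\<bar>y - y0\<bar> = y0 - y"
      using True by auto
    show ?thesis unfolding e using DN0[OF b K _ _ True l y0K(2)] y y0 by auto
  next
    case False
    have "y powr (1-\<beta>) \<le> y0 powr (1-\<beta>)" using False y0 b by (intro powr_mono2') auto
    then have e: "\<bar>y0 powr (1-\<beta>) - y powr (1-\<beta>)\<bar> = y0 powr (1-\<beta>) - y powr (1-\<beta>)" "\<bar>y - y0\<bar> = y - y0"
      using False by auto
    show ?thesis unfolding e using DN0[OF b K _ _ _ y0K(1) u] y y0 False by auto
  qed
  then show "\<bar>y0 powr (1-\<beta>) - y powr (1-\<beta>)\<bar>/(\<beta>-1) \<le> K powr \<beta> * y0 powr (-\<beta>) * \<bar>y - y0\<bar>"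
    "y0 powr (-\<beta>) * \<bar>y - y0\<bar> / K powr \<beta> \<le> \<bar>y0 powr (1-\<beta>) - y powr (1-\<beta>)\<bar>/(\<beta>-1)" by auto
qed


theorem lemma7p2:
  fixes \<mu> :: "'a::metric_space measure" and a \<beta> :: real
  assumes "compact (UNIV :: 'a set)"
    and "geodesic_space (UNIV :: 'a set)"
    and "doubling_measure \<mu>"
    and "supports_2_poincare \<mu>"
    and "-1 < a" and "a < 1"
    and "\<beta> > 1"
  shows "\<exists>C>0. \<forall>(x0::'a) y0 R. y0 \<ge> 0 \<and> R > 0 \<and> \<not> (d_rho_inf \<beta> (x0, y0) < 2 * R) \<longrightarrow>
     (\<forall>x y. y \<ge> 0 \<and> d_rho \<beta> (x0, y0) (x, y) < R \<longrightarrow>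
        omega_w \<beta> (x0, y0) / C \<le> omega_w \<beta> (x, y) \<and> omega_w \<beta> (x, y) \<le> C * omega_w \<beta> (x0, y0) \<and>
        rho_w \<beta> (x0, y0) / C \<le> rho_w \<beta> (x, y) \<and> rho_w \<beta> (x, y) \<le> C * rho_w \<beta> (x0, y0) \<and>
        rho_w \<beta> (x0, y0) / C * dX (x0, y0) (x, y) \<le> d_rho \<beta> (x0, y0) (x, y) \<and>
        d_rho \<beta> (x0, y0) (x, y) \<le> C * rho_w \<beta> (x0, y0) * dX (x0, y0) (x, y) \<and>
        (y0 \<ge> 1 \<and> y > 1 \<longrightarrow>
           1 / (C * (\<beta> - 1)) * \<bar>y0 powr (1 - \<beta>) - y powr (1 - \<beta>)\<bar> + dist x x0 / (C * y0 powr \<beta>)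
             \<le> d_rho \<beta> (x, y) (x0, y0) \<and>
           d_rho \<beta> (x, y) (x0, y0)
             \<le> C / (\<beta> - 1) * \<bar>y0 powr (1 - \<beta>) - y powr (1 - \<beta>)\<bar> + C / y0 powr \<beta> * dist x x0))"
proof -
  have b: "\<beta> > 1" using assms(7) .
  have b0: "\<beta> \<ge> 0" using b by simp
  note geo = assms(2)
  obtain Dz where Dz: "\<And>x x'::'a. dist x x' \<le> Dz" "Dz \<ge> 0"
  proof -
    have "bounded (UNIV::'a set)" using assms(1) by (rule compact_imp_bounded)
    then obtain c e where ce: "\<forall>y\<in>(UNIV::'a set). dist c y \<le> e" unfolding bounded_def by auto
    have "dist x x' \<le> 2 * e" for x x' :: 'a
    proof -
      have "dist x x' \<le> dist x c + dist c x'" by (rule dist_triangle)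
      moreover have "dist x c \<le> e" by (metis ce UNIV_I dist_commute)
      moreover have "dist c x' \<le> e" using ce by simp
      ultimately show ?thesis by simp
    qed
    moreover have "0 \<le> 2 * e" using ce by (metis dist_self mult_nonneg_nonneg zero_le_numeral UNIV_I)
    ultimately show ?thesis using that by blast
  qed
  define K where "K = Kc \<beta>"
  define Kb where "Kb = K powr \<beta>"
  define \<kappa> where "\<kappa> = kap \<beta> Dz"
  define C where "C = Kb * Kb + (Kb + 1) / \<kappa>"
  have K1: "K \<ge> 1" using kconsts[OF b] by (simp add: K_def)
  have Kb1: "Kb \<ge> 1" using K1 b0 by (simp add: Kb_def ge_one_powr_ge_zero)
  have kp: "\<kappa> > 0"
  proof -
    have "0 < 75*(\<beta>-1)*(Dz + K)" using b Dz(2) K1 by (intro mult_pos_pos) auto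
    then have "0 < 8/(75*(\<beta>-1)*(Dz + K))" by simp
    moreover have "0 < 1/(Kb * Kb)" using Kb1 by simp
    ultimately show ?thesis by (simp add: \<kappa>_def kap_def Kb_def K_def)
  qed
  have CKb2: "Kb * Kb \<le> C" using Kb1 kp by (simp add: C_def)
  have CKb: "Kb \<le> C" using CKb2 Kb1 by (smt (verit) mult_le_cancel_left1)
  have Ck: "Kb + 1 \<le> C * \<kappa>"
  proof -
    have "(Kb + 1) / \<kappa> \<le> C" using Kb1 by (simp add: C_def)
    then show ?thesis using kp by (simp add: divide_le_eq)
  qed
  have C0: "C > 0" using CKb Kb1 by simp
  have iC: "1 / C \<le> \<kappa>" using Ck C0 kp Kb1 by (simp add: divide_le_eq mult.commute)
  show ?thesis
  proof (rule exI[of _ C], intro conjI)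
    show "C > 0" by (rule C0)
    show "\<forall>(x0::'a) y0 R. y0 \<ge> 0 \<and> R > 0 \<and> \<not> (d_rho_inf \<beta> (x0, y0) < 2 * R) \<longrightarrow>
     (\<forall>x y. y \<ge> 0 \<and> d_rho \<beta> (x0, y0) (x, y) < R \<longrightarrow>
        omega_w \<beta> (x0, y0) / C \<le> omega_w \<beta> (x, y) \<and> omega_w \<beta> (x, y) \<le> C * omega_w \<beta> (x0, y0) \<and>
        rho_w \<beta> (x0, y0) / C \<le> rho_w \<beta> (x, y) \<and> rho_w \<beta> (x, y) \<le> C * rho_w \<beta> (x0, y0) \<and>
        rho_w \<beta> (x0, y0) / C * dX (x0, y0) (x, y) \<le> d_rho \<beta> (x0, y0) (x, y) \<and>
        d_rho \<beta> (x0, y0) (x, y) \<le> C * rho_w \<beta> (x0, y0) * dX (x0, y0) (x, y) \<and>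
        (y0 \<ge> 1 \<and> y > 1 \<longrightarrow>
           1 / (C * (\<beta> - 1)) * \<bar>y0 powr (1 - \<beta>) - y powr (1 - \<beta>)\<bar> + dist x x0 / (C * y0 powr \<beta>)
             \<le> d_rho \<beta> (x, y) (x0, y0) \<and>
           d_rho \<beta> (x, y) (x0, y0)
             \<le> C / (\<beta> - 1) * \<bar>y0 powr (1 - \<beta>) - y powr (1 - \<beta>)\<bar> + C / y0 powr \<beta> * dist x x0))"
    proof (intro allI impI)
      fix x0 :: 'a and y0 R :: real
      assume H: "y0 \<ge> 0 \<and> R > 0 \<and> \<not> (d_rho_inf \<beta> (x0, y0) < 2 * R)"
      fix x :: 'a and y :: real
      assume P: "y \<ge> 0 \<and> d_rho \<beta> (x0, y0) (x, y) < R"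
      have y0: "y0 \<ge> 0" and R: "R > 0" using H by auto
      have y: "y \<ge> 0" and dR: "d_rho \<beta> (x0, y0) (x, y) < R" using P by auto
      have X: "2 * R \<le> Gt \<beta> - GG \<beta> y0"
        using H d_rho_inf_le[OF b, of x0 y0] by (simp add: Gt_def)
      define m0 where "m0 = max 1 y0"
      define r0 where "r0 = rho_w \<beta> (x0, y0)"
      define ry where "ry = rho_w \<beta> (x, y)"
      define dd where "dd = dX (x0, y0) (x, y)"
      have m0: "m0 \<ge> 1" "y0 \<le> m0" by (auto simp: m0_def)
      have r0e: "r0 = m0 powr (-\<beta>)" using b0 by (simp add: r0_def rho_rr rr_max m0_def)
      have rye: "ry = (max 1 y) powr (-\<beta>)" using b0 by (simp add: ry_def rho_rr rr_max)
      have r0p: "r0 > 0" using r0e m0 by simp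
      have ryp: "ry > 0" using rye by simp
      have dd0: "dd \<ge> 0" by (simp add: dd_def dX_nonneg)
      have ddsym: "dX (x, y) (x0, y0) = dd" by (simp add: dd_def dX_sym)
      have fin1: "II \<beta> (x0, y0) (x, y) < \<infinity>" using II_fin[OF geo] y0 y b0 by auto
      have fin2: "II \<beta> (x, y) (x0, y0) < \<infinity>" using II_fin[OF geo] y0 y b0 by auto
      obtain \<gamma> ca cb where cv: "rect_curve dX Xset \<gamma> ca cb" "\<gamma> ca = (x0, y0)" "\<gamma> cb = (x, y)"
        "line_integral dX (rho_w \<beta>) \<gamma> ca cb < ennreal R"
        using ball_curve[OF fin1 dR] by blast
      interpret cvl: curv \<gamma> ca cb \<beta> using cv(1) b by unfold_locales
      have cbin: "cb \<in> {ca..cb}" using cvl.ab by simp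
      have hts: "y \<le> K * m0" "m0 / K \<le> max 1 y"
        using cvl.ball_heights[OF y0 _ cv(4) R X cbin] cv(2,3) by (auto simp: K_def m0_def)
      have Km: "m0 \<le> K * m0" using K1 m0 by (simp add: mult_le_cancel_right1)
      have y0Km: "y0 \<le> K * m0" using Km m0 by linarith
      have ry_le: "ry \<le> Kb * r0"
      proof -
        have "0 < m0 / K" using m0 K1 by simp
        then have "(max 1 y) powr (-\<beta>) \<le> (m0 / K) powr (-\<beta>)" using hts(2) b0 by (intro powr_mono2') auto
        also have "\<dots> = Kb * r0" using m0 K1 by (simp add: r0e Kb_def powr_divide powr_minus_divide)
        finally show ?thesis by (simp add: rye)
      qed
      have r0_le: "r0 \<le> Kb * ry"
      proof -
        have K1m: "1 \<le> K * m0" using Km m0 by linarith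
        have "max 1 y \<le> K * m0" using hts(1) K1m by simp
        then have "(K * m0) powr (-\<beta>) \<le> (max 1 y) powr (-\<beta>)" using b0 by (intro powr_mono2') auto
        moreover have "(K * m0) powr (-\<beta>) = r0 / Kb" using m0 K1 by (simp add: r0e Kb_def powr_mult powr_minus_divide)
        ultimately have "r0 / Kb \<le> ry" by (simp add: rye)
        then show ?thesis using Kb1 by (simp add: divide_le_eq mult.commute)
      qed
      have lowgen: "\<kappa> * r0 * dX P Q \<le> d_rho \<beta> P Q"
        if PQ: "(P = (x0, y0) \<and> Q = (x, y)) \<or> (P = (x, y) \<and> Q = (x0, y0))" for P Q
      proof (rule d_rho_lower)
        show "II \<beta> P Q < \<infinity>" using fin1 fin2 PQ by auto
        show "0 \<le> \<kappa> * r0 * dX P Q" using kp r0p dX_nonneg[of P Q] by simp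
        fix \<gamma>' a' b' assume rc': "rect_curve dX Xset \<gamma>' a' b'" and e: "\<gamma>' a' = P" "\<gamma>' b' = Q"
        interpret cw: curv \<gamma>' a' b' \<beta> using rc' b by unfold_locales
        have h: "0 \<le> snd P" "snd P \<le> K * m0" "0 \<le> snd Q" "snd Q \<le> K * m0"
          using PQ y0 y hts(1) y0Km by auto
        have "ennreal (kap \<beta> Dz * rr \<beta> y0 * dX (\<gamma>' a') (\<gamma>' b')) \<le> line_integral dX (rho_w \<beta>) \<gamma>' a' b'"
          using cw.LB[OF y0 Dz] h e by (auto simp: K_def m0_def)
        then show "ennreal (\<kappa> * r0 * dX P Q) \<le> line_integral dX (rho_w \<beta>) \<gamma>' a' b'"
          using e by (simp add: \<kappa>_def r0_def rho_rr)
      qed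
      have low1: "\<kappa> * r0 * dd \<le> d_rho \<beta> (x0, y0) (x, y)" using lowgen[of "(x0, y0)" "(x, y)"] by (simp add: dd_def)
      have low2: "\<kappa> * r0 * dd \<le> d_rho \<beta> (x, y) (x0, y0)" using lowgen[of "(x, y)" "(x0, y0)"] ddsym by simp
      have mx: "max r0 ry \<le> Kb * r0" using ry_le Kb1 r0p by (simp add: mult_le_cancel_right1)
      have up1: "d_rho \<beta> (x0, y0) (x, y) \<le> Kb * r0 * dd"
      proof -
        have "d_rho \<beta> (x0, y0) (x, y) \<le> max r0 ry * dd"
          using d_rho_upper[OF geo, of "(x0, y0)" "(x, y)" \<beta>] y0 y b0 by (simp add: r0_def ry_def rho_rr dd_def)
        also have "\<dots> \<le> Kb * r0 * dd" using mx dd0 by (intro mult_right_mono) auto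
        finally show ?thesis .
      qed
      have up2: "d_rho \<beta> (x, y) (x0, y0) \<le> Kb * r0 * dd"
      proof -
        have "d_rho \<beta> (x, y) (x0, y0) \<le> max ry r0 * dd"
          using d_rho_upper[OF geo, of "(x, y)" "(x0, y0)" \<beta>] y0 y b0 ddsym by (simp add: r0_def ry_def rho_rr)
        also have "\<dots> \<le> Kb * r0 * dd" using mx dd0 by (intro mult_right_mono) (auto simp: max.commute)
        finally show ?thesis .
      qed
      have i3: "r0 / C \<le> ry"
      proof -
        have "r0 \<le> C * ry" using r0_le CKb ryp by (smt (verit) mult_right_mono)
        then show ?thesis using C0 by (simp add: divide_le_eq mult.commute)
      qed
      have i4: "ry \<le> C * r0" using ry_le CKb r0p by (smt (verit) mult_right_mono)
      have sq1: "r0\<^sup>2 \<le> (Kb * Kb) * ry\<^sup>2"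
      proof -
        have "r0\<^sup>2 \<le> (Kb * ry)\<^sup>2" using r0_le r0p by (intro power_mono) auto
        then show ?thesis by (simp add: power2_eq_square algebra_simps)
      qed
      have sq2: "ry\<^sup>2 \<le> (Kb * Kb) * r0\<^sup>2"
      proof -
        have "ry\<^sup>2 \<le> (Kb * r0)\<^sup>2" using ry_le ryp by (intro power_mono) auto
        then show ?thesis by (simp add: power2_eq_square algebra_simps)
      qed
      have i1: "r0\<^sup>2 / C \<le> ry\<^sup>2"
      proof -
        have "r0\<^sup>2 \<le> C * ry\<^sup>2" using sq1 CKb2 by (smt (verit) mult_right_mono zero_le_power2)
        then show ?thesis using C0 by (simp add: divide_le_eq mult.commute)
      qed
      have i2: "ry\<^sup>2 \<le> C * r0\<^sup>2" using sq2 CKb2 by (smt (verit) mult_right_mono zero_le_power2)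
      have i5: "r0 / C * dd \<le> d_rho \<beta> (x0, y0) (x, y)"
      proof -
        have "r0 / C * dd = (1 / C) * (r0 * dd)" by simp
        also have "\<dots> \<le> \<kappa> * (r0 * dd)" using iC r0p dd0 by (intro mult_right_mono) auto
        finally show ?thesis using low1 by (simp add: mult.assoc)
      qed
      have i6: "d_rho \<beta> (x0, y0) (x, y) \<le> C * r0 * dd"
      proof -
        have "Kb * r0 * dd \<le> C * r0 * dd" using CKb r0p dd0 by (intro mult_right_mono) auto
        then show ?thesis using up1 by simp
      qed
      have i7: "y0 \<ge> 1 \<and> y > 1 \<longrightarrow>
           1 / (C * (\<beta> - 1)) * \<bar>y0 powr (1 - \<beta>) - y powr (1 - \<beta>)\<bar> + dist x x0 / (C * y0 powr \<beta>)
             \<le> d_rho \<beta> (x, y) (x0, y0) \<and>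
           d_rho \<beta> (x, y) (x0, y0)
             \<le> C / (\<beta> - 1) * \<bar>y0 powr (1 - \<beta>) - y powr (1 - \<beta>)\<bar> + C / y0 powr \<beta> * dist x x0"
      proof
        assume yy: "y0 \<ge> 1 \<and> y > 1"
        then have y01: "y0 \<ge> 1" and y1: "y > 1" by auto
        have m0y: "m0 = y0" using y01 by (simp add: m0_def)
        have l: "y0 / K \<le> y" using hts(2) m0y y1 by simp
        have u: "y \<le> K * y0" using hts(1) m0y by simp
        define \<Delta> where "\<Delta> = \<bar>y0 powr (1 - \<beta>) - y powr (1 - \<beta>)\<bar>"
        define dz where "dz = dist x x0"
        have r0y: "r0 = y0 powr (-\<beta>)" using r0e m0y by simp
        note dn = DN[OF b K1 y01 y1 l u, folded \<Delta>_def Kb_def r0y]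
        have inv: "1 / y0 powr \<beta> = r0" using r0y by (simp add: powr_minus_divide)
        have dyd: "\<bar>y - y0\<bar> \<le> dd" using dX_snd[of "(x0, y0)" "(x, y)"] by (simp add: dd_def abs_minus_commute)
        have dzd: "dz \<le> dd" using dX_fst[of "(x0, y0)" "(x, y)"] by (simp add: dd_def dz_def dist_commute)
        have dds: "dd \<le> \<bar>y - y0\<bar> + dz" by (simp add: dd_def dz_def dX_def dist_commute abs_minus_commute)
        have dz0: "dz \<ge> 0" by (simp add: dz_def)
        have D0: "\<Delta> \<ge> 0" by (simp add: \<Delta>_def)
        show "1 / (C * (\<beta> - 1)) * \<Delta> + dz / (C * y0 powr \<beta>) \<le> d_rho \<beta> (x, y) (x0, y0) \<and>
              d_rho \<beta> (x, y) (x0, y0) \<le> C / (\<beta> - 1) * \<Delta> + C / y0 powr \<beta> * dz"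
          unfolding \<Delta>_def[symmetric] dz_def[symmetric]
        proof
          have e1: "1 / (C * (\<beta> - 1)) * \<Delta> = (1 / C) * (\<Delta> / (\<beta> - 1))" by simp
          have e2: "dz / (C * y0 powr \<beta>) = (1 / C) * (r0 * dz)" unfolding inv[symmetric] by simp
          have "1 / (C * (\<beta> - 1)) * \<Delta> + dz / (C * y0 powr \<beta>) = (1 / C) * (\<Delta> / (\<beta> - 1) + r0 * dz)"
            unfolding e1 e2 by (simp only: distrib_left)
          also have "\<dots> \<le> (1 / C) * (Kb * r0 * dd + r0 * dd)"
          proof (rule mult_left_mono[OF add_mono])
            show "\<Delta> / (\<beta> - 1) \<le> Kb * r0 * dd"
              using dn(1) dyd Kb1 r0p by (smt (verit) mult_left_mono mult_nonneg_nonneg)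
            show "r0 * dz \<le> r0 * dd" using dzd r0p by (intro mult_left_mono) auto
          qed (use C0 in auto)
          also have "\<dots> = ((Kb + 1) / C) * (r0 * dd)" by (simp add: algebra_simps add_divide_distrib)
          also have "\<dots> \<le> \<kappa> * (r0 * dd)"
          proof (rule mult_right_mono)
            show "(Kb + 1) / C \<le> \<kappa>" using Ck C0 by (simp add: divide_le_eq mult.commute)
          qed (use r0p dd0 in auto)
          also have "\<dots> \<le> d_rho \<beta> (x, y) (x0, y0)" using low2 by (simp add: mult.assoc)
          finally show "1 / (C * (\<beta> - 1)) * \<Delta> + dz / (C * y0 powr \<beta>) \<le> d_rho \<beta> (x, y) (x0, y0)" .
        next
          have "d_rho \<beta> (x, y) (x0, y0) \<le> Kb * r0 * dd" by (rule up2)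
          also have "\<dots> \<le> Kb * r0 * (\<bar>y - y0\<bar> + dz)" using dds Kb1 r0p by (intro mult_left_mono) auto
          also have "\<dots> = (Kb * Kb) * (r0 * \<bar>y - y0\<bar> / Kb) + Kb * (r0 * dz)" using Kb1 by (simp add: field_simps)
          also have "\<dots> \<le> C * (\<Delta> / (\<beta> - 1)) + C * (r0 * dz)"
          proof (rule add_mono)
            show "(Kb * Kb) * (r0 * \<bar>y - y0\<bar> / Kb) \<le> C * (\<Delta> / (\<beta> - 1))"
              using dn(2) CKb2 b D0 r0p C0 Kb1 by (intro mult_mono) auto
            show "Kb * (r0 * dz) \<le> C * (r0 * dz)" using CKb r0p dz0 by (intro mult_right_mono) auto
          qed
          also have "\<dots> = C / (\<beta> - 1) * \<Delta> + C / y0 powr \<beta> * dz" unfolding inv[symmetric] by simp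
          finally show "d_rho \<beta> (x, y) (x0, y0) \<le> C / (\<beta> - 1) * \<Delta> + C / y0 powr \<beta> * dz" .
        qed
      qed
      show "omega_w \<beta> (x0, y0) / C \<le> omega_w \<beta> (x, y) \<and> omega_w \<beta> (x, y) \<le> C * omega_w \<beta> (x0, y0) \<and>
        rho_w \<beta> (x0, y0) / C \<le> rho_w \<beta> (x, y) \<and> rho_w \<beta> (x, y) \<le> C * rho_w \<beta> (x0, y0) \<and>
        rho_w \<beta> (x0, y0) / C * dX (x0, y0) (x, y) \<le> d_rho \<beta> (x0, y0) (x, y) \<and>
        d_rho \<beta> (x0, y0) (x, y) \<le> C * rho_w \<beta> (x0, y0) * dX (x0, y0) (x, y) \<and>
        (y0 \<ge> 1 \<and> y > 1 \<longrightarrow>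
           1 / (C * (\<beta> - 1)) * \<bar>y0 powr (1 - \<beta>) - y powr (1 - \<beta>)\<bar> + dist x x0 / (C * y0 powr \<beta>)
             \<le> d_rho \<beta> (x, y) (x0, y0) \<and>
           d_rho \<beta> (x, y) (x0, y0)
             \<le> C / (\<beta> - 1) * \<bar>y0 powr (1 - \<beta>) - y powr (1 - \<beta>)\<bar> + C / y0 powr \<beta> * dist x x0)"
        using i1 i2 i3 i4 i5 i6 i7
        by (simp add: omega_rr r0_def ry_def dd_def rho_rr)
    qed
  qed
qed


end
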